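(* Let $\sigma\ge0$, $\alpha\ge0$, let $0<a<b$ be defined as follows: if $\alpha>0$, $a=\max(\sigma,a_c)$ and $b$ is the unique $x>a$ with $\psi_\alpha(x,a)=0$; if $\alpha=0$, $a=\sigma>0$ and $b=\frac23\big(\sqrt{\sigma^2+6}+\frac\sigma2\big)$. Let $\nu^a_\alpha$ be the probability measure on $]a,b]$ with density $\frac1{2\pi}\sqrt{\frac{b-x}{x-a}}\Big(2x+b-a-2\alpha\sqrt{\frac ab}\frac1x\Big)$, and let $C$ be the constant such that $\int\log\frac1{|x-t|}\nu^a_\alpha(dt)+\frac12\big(x^2+2\alpha\log\frac1x\big)=C$ for $x\in\,]a,b]$. Then $$\begin{aligned}C&=-\frac1{16}\Big(a^2+6ab+b^2+2(a-b)^2\log\frac{b-a}4-4(a+b)^2+4(b^2-a^2)\log\frac{b-a}4\Big)\\&\quad-\frac{\alpha}{\sqrt{ab}}\Big(\frac{a+b}2-\frac{b-a}2\log\frac{b-a}4-(a+b)\big(\tfrac12+\log2-\tfrac12\log(b-a)\big)+\sqrt{ab}\log\frac{\sqrt b+\sqrt a}{\sqrt b-\sqrt a}\Big).\end{aligned}$$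
   Context: For $\alpha>0$ and $x,a>0$: $\varphi_\alpha(x,a)=x+a-\frac{2\alpha}{\sqrt{ax}}$, $\psi_\alpha(x,a)=\frac34(x-a)^2+a(x-a)+2\alpha\frac{\sqrt a}{\sqrt x}-2\alpha-2$, $E_\alpha=\{a>0:\exists x>a,\ \varphi_\alpha(x,a)\ge0,\ \psi_\alpha(x,a)=0\}$, and $a_c=\min E_\alpha$. For each $a>0$ there is a unique $x>a$ with $\psi_\alpha(x,a)=0$. *)

theory Defs
  imports "HOL-Analysis.Analysis"
begin

definition phi_alpha :: "real \<Rightarrow> real \<Rightarrow> real \<Rightarrow> real" where
  "phi_alpha \<alpha> x a = x + a - 2 * \<alpha> / sqrt (a * x)"

definition psi_alpha :: "real \<Rightarrow> real \<Rightarrow> real \<Rightarrow> real" where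
  "psi_alpha \<alpha> x a = 3/4 * (x - a)^2 + a * (x - a) + 2 * \<alpha> * (sqrt a / sqrt x) - 2 * \<alpha> - 2"

definition E_alpha :: "real \<Rightarrow> real set" where
  "E_alpha \<alpha> = {a. a > 0 \<and> (\<exists>x. x > a \<and> phi_alpha \<alpha> x a \<ge> 0 \<and> psi_alpha \<alpha> x a = 0)}"

definition a_crit :: "real \<Rightarrow> real" where
  "a_crit \<alpha> = (LEAST a. a \<in> E_alpha \<alpha>)"

definition nu_density :: "real \<Rightarrow> real \<Rightarrow> real \<Rightarrow> real \<Rightarrow> real" where
  "nu_density \<alpha> a b x =
     1 / (2 * pi) * sqrt ((b - x) / (x - a)) * (2 * x + b - a - 2 * \<alpha> * sqrt (a / b) * (1 / x))"

end

theory Submission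
  imports Defs
begin


lemma fac_id: "1 - 2 * r * cos u + r^2 = (1-r)^2 + r * (2 - 2 * cos (u::real))"
  by (simp add: power2_eq_square algebra_simps)

lemma fac_pos: assumes "0 \<le> r" "r < 1" shows "0 < 1 - 2 * r * cos (u::real) + r^2"
proof -
  have "0 \<le> r * (2 - 2 * cos u)" using assms cos_le_one[of u] by auto
  moreover have "0 < (1-r)^2" using assms by auto
  ultimately show ?thesis unfolding fac_id by linarith
qed

lemma fac_lower: assumes "0 \<le> r" shows "r * (2 - 2 * cos (u::real)) \<le> 1 - 2 * r * cos u + r^2"
  unfolding fac_id by simp

lemma fac_upper: assumes "0 \<le> r" "r \<le> 1" shows "1 - 2 * r * cos (u::real) + r^2 \<le> 4"
proof -
  have "r * (-cos u) \<le> r * 1" using assms cos_ge_minus_one[of u]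
    by (intro mult_left_mono) auto
  moreover have "r^2 \<le> 1" using assms by (simp add: power_le_one)
  ultimately show ?thesis using assms by linarith
qed

lemma sin_sq: "sin (x::real) * sin x = 1 - cos x * cos x"
  using sin_squared_eq[of x] by (simp add: power2_eq_square)

lemma cos_prod_identity:
  "(2 - 2 * cos (t+p)) * (2 - 2 * cos (t-p)) = 4 * (cos t - cos (p::real))^2"
proof -
  have "cos (t+p) * cos (t-p) = cos t * cos t * (cos p * cos p) - (sin t * sin t) * (sin p * sin p)"
    by (simp add: cos_add cos_diff algebra_simps)
  also have "\<dots> = cos t * cos t - sin p * sin p"
    unfolding sin_sq by (simp add: algebra_simps)
  finally have 1: "cos (t+p) * cos (t-p) = cos t * cos t - sin p * sin p" .
  have 2: "cos (t+p) + cos (t-p) = 2 * cos t * cos p" by (simp add: cos_add cos_diff)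
  have "(2 - 2 * cos (t+p)) * (2 - 2 * cos (t-p)) = 4 - 4 * (cos (t+p) + cos (t-p)) + 4 * (cos (t+p) * cos (t-p))"
    by (simp add: algebra_simps)
  also have "\<dots> = 4 * (cos t - cos p)^2" unfolding 1 2 sin_sq by (simp add: power2_eq_square algebra_simps)
  finally show ?thesis .
qed

lemma norm_one_minus_sq:
  "(cmod (1 - complex_of_real r * cis u))^2 = 1 - 2 * r * cos u + r^2"
proof -
  have "1 - complex_of_real r * cis u = Complex (1 - r * cos u) (- (r * sin u))"
    by (simp add: complex_eq_iff cis.code)
  then have "(cmod (1 - complex_of_real r * cis u))^2 = (1 - r * cos u)^2 + (r * sin u)^2"
    by (simp add: cmod_power2)
  also have "\<dots> = 1 - 2 * r * cos u + r^2"
  proof -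
    have "(r * sin u)^2 = r * r * (sin u * sin u)" by (simp add: power2_eq_square)
    then show ?thesis unfolding sin_sq by (simp add: power2_eq_square algebra_simps)
  qed
  finally show ?thesis .
qed

lemma log_series:
  fixes r u :: real
  assumes "0 \<le> r" "r < 1"
  shows "(\<lambda>n. r^n * cos (real n * u) / real n) sums (- ln (1 - 2 * r * cos u + r^2) / 2)"
proof -
  define z where "z = - complex_of_real r * cis u"
  have nz: "cmod z < 1" using assms by (simp add: z_def norm_mult)
  have S: "(\<lambda>n. - ((-z)^n) / of_nat n) sums Ln (1 + z)" using Ln_series'[OF nz] .
  have S2: "(\<lambda>n. Re (- ((-z)^n) / of_nat n)) sums Re (Ln (1 + z))" using sums_Re[OF S] .
  have T: "Re (- ((-z)^n) / of_nat n) = - (r^n * cos (real n * u) / real n)" for n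
    by (simp add: z_def power_mult_distrib cos_n_Re_cis_pow_n)
  have nz1: "1 + z \<noteq> 0"
  proof
    assume "1 + z = 0" then have "z = -1" by (simp add: add_eq_0_iff)
    with nz show False by simp
  qed
  have C: "(cmod (1 + z))^2 = 1 - 2 * r * cos u + r^2"
    using norm_one_minus_sq[of r u] by (simp add: z_def)
  have "cmod (1 + z) = sqrt (1 - 2 * r * cos u + r^2)"
    by (subst C[symmetric]) simp
  then have R: "Re (Ln (1 + z)) = ln (1 - 2 * r * cos u + r^2) / 2"
    using nz1 fac_pos[OF assms, of u] by (simp add: ln_sqrt)
  from S2 have "(\<lambda>n. - (r^n * cos (real n * u) / real n)) sums (ln (1 - 2 * r * cos u + r^2) / 2)"
    unfolding T R .
  then have "(\<lambda>n. - (- (r^n * cos (real n * u) / real n))) sums (- (ln (1 - 2 * r * cos u + r^2) / 2))"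
    by (rule sums_minus)
  then show ?thesis by simp
qed

lemma poisson_series:
  fixes w y :: real
  assumes "0 \<le> w" "w < 1"
  shows "(\<lambda>n. w^n * cos (real n * y)) sums ((1 - w * cos y) / (1 - 2 * w * cos y + w^2))"
proof -
  define z where "z = complex_of_real w * cis y"
  have nz: "norm z < 1" using assms by (simp add: z_def norm_mult)
  have "(\<lambda>n. z^n) sums (1/(1-z))" using geometric_sums[OF nz] .
  from sums_Re[OF this] have "(\<lambda>n. Re (z^n)) sums Re (1/(1-z))" .
  moreover have "Re (z^n) = w^n * cos (real n * y)" for n
    by (simp add: z_def power_mult_distrib cos_n_Re_cis_pow_n)
  moreover have "Re (1/(1-z)) = (1 - w * cos y) / (1 - 2 * w * cos y + w^2)"
  proof -
    have "Re (1/(1-z)) = Re (1 - z) / (cmod (1 - z))^2"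
      by (simp add: Re_divide cmod_power2)
    also have "Re (1 - z) = 1 - w * cos y" by (simp add: z_def cis.code)
    also have "(cmod (1 - z))^2 = 1 - 2 * w * cos y + w^2" using norm_one_minus_sq[of w y] by (simp add: z_def)
    finally show ?thesis .
  qed
  ultimately show ?thesis by simp
qed


lemma set_int_cont: "continuous_on {a..b} f \<Longrightarrow> set_integrable lborel {a..b::real} (f::real\<Rightarrow>real)"
  by (rule borel_integrable_atLeastAtMost')

lemma FTC_real:
  fixes f F :: "real \<Rightarrow> real"
  assumes "a \<le> b" "\<And>t. (F has_real_derivative f t) (at t)" "continuous_on {a..b} f"
  shows "(LBINT t:{a..b}. f t) = F b - F a"
  unfolding set_lebesgue_integral_def
proof (rule integral_FTC_atLeastAtMost[OF assms(1) _ assms(3)])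
  fix x show "(F has_vector_derivative f x) (at x within {a..b})"
    using assms(2)[of x] by (simp add: has_real_derivative_iff_has_vector_derivative has_vector_derivative_at_within)
qed

lemma cos_int: "(LBINT t:{0..pi}. cos (real m * t)) = (if m = 0 then pi else 0)"
proof -
  define F where "F t = (if m = 0 then t else sin (real m * t) / real m)" for t
  have D: "(F has_real_derivative cos (real m * t)) (at t)" for t
  proof (cases "m = 0")
    case True then show ?thesis unfolding F_def by (auto intro!: derivative_eq_intros)
  next
    case False then show ?thesis unfolding F_def by (auto intro!: derivative_eq_intros)
  qed
  have "(LBINT t:{0..pi}. cos (real m * t)) = F pi - F 0"
    by (rule FTC_real[OF _ D]) (auto intro!: continuous_intros)
  also have "\<dots> = (if m = 0 then pi else 0)" unfolding F_def
    by (simp add: mult.commute)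
  finally show ?thesis .
qed
lemma cos_cos_int:
  "(LBINT t:{0..pi}. cos (real k * t) * cos (real n * t)) = (if k = n then (if n = 0 then pi else pi/2) else 0)"
proof -
  define d where "d = (if n \<le> k then k - n else n - k)"
  have cd: "cos (real k * t - real n * t) = cos (real d * t)" for t
  proof (cases "n \<le> k")
    case True
    then have "real k * t - real n * t = real d * t" unfolding d_def by (simp add: of_nat_diff left_diff_distrib)
    then show ?thesis by simp
  next
    case False
    then have "real k * t - real n * t = - (real d * t)" unfolding d_def by (simp add: of_nat_diff left_diff_distrib)
    then show ?thesis by simp
  qed
  have eq: "cos (real k * t) * cos (real n * t) = cos (real d * t) / 2 + cos (real (k+n) * t) / 2" for t
  proof -
    have "cos (real k * t) * cos (real n * t) = (cos (real k * t - real n * t) + cos (real k * t + real n * t)) / 2"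
      by (rule cos_times_cos)
    also have "real k * t + real n * t = real (k+n) * t" by (simp add: distrib_right)
    finally show ?thesis unfolding cd by simp
  qed
  have "(LBINT t:{0..pi}. cos (real k * t) * cos (real n * t))
        = (LBINT t:{0..pi}. cos (real d * t) / 2 + cos (real (k+n) * t) / 2)"
    by (simp only: eq)
  also have "\<dots> = (LBINT t:{0..pi}. cos (real d * t)) / 2 + (LBINT t:{0..pi}. cos (real (k+n) * t)) / 2"
    by (subst set_integral_add) (auto intro!: set_int_cont continuous_intros)
  also have "\<dots> = (if k = n then (if n = 0 then pi else pi/2) else 0)"
  proof (cases "k = n")
    case True then show ?thesis unfolding cos_int d_def by simp
  next
    case False then have "d \<noteq> 0" "k + n \<noteq> 0" unfolding d_def by auto
    then show ?thesis unfolding cos_int using False by simp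
  qed
  finally show ?thesis .
qed

definition Lr :: "real \<Rightarrow> real \<Rightarrow> real \<Rightarrow> real" where
  "Lr r p t = ln ((1 - 2 * r * cos (t+p) + r^2) * (1 - 2 * r * cos (t-p) + r^2)) / 2 - ln 2"

lemma Lr_series:
  assumes "0 \<le> r" "r < 1"
  shows "(\<lambda>k. 2 * r^k * cos (real k * p) / real k * cos (real k * t)) sums (- Lr r p t - ln 2)"
proof -
  have A: "(\<lambda>k. r^k * cos (real k * (t+p)) / real k) sums (- ln (1 - 2 * r * cos (t+p) + r^2) / 2)"
    by (rule log_series[OF assms])
  have B: "(\<lambda>k. r^k * cos (real k * (t-p)) / real k) sums (- ln (1 - 2 * r * cos (t-p) + r^2) / 2)"
    by (rule log_series[OF assms])
  have "(\<lambda>k. r^k * cos (real k * (t+p)) / real k + r^k * cos (real k * (t-p)) / real k) sums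
        (- ln (1 - 2 * r * cos (t+p) + r^2) / 2 + - ln (1 - 2 * r * cos (t-p) + r^2) / 2)"
    by (rule sums_add[OF A B])
  moreover have "r^k * cos (real k * (t+p)) / real k + r^k * cos (real k * (t-p)) / real k
      = 2 * r^k * cos (real k * p) / real k * cos (real k * t)" for k
    by (simp add: distrib_left right_diff_distrib cos_add cos_diff add_divide_distrib[symmetric] algebra_simps)
  moreover have "- ln (1 - 2 * r * cos (t+p) + r^2) / 2 + - ln (1 - 2 * r * cos (t-p) + r^2) / 2 = - Lr r p t - ln 2"
  proof -
    have "ln ((1 - 2 * r * cos (t+p) + r^2) * (1 - 2 * r * cos (t-p) + r^2)) =
          ln (1 - 2 * r * cos (t+p) + r^2) + ln (1 - 2 * r * cos (t-p) + r^2)"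
      using fac_pos[OF assms, of "t+p"] fac_pos[OF assms, of "t-p"] by (simp add: ln_mult)
    then show ?thesis unfolding Lr_def by linarith
  qed
  ultimately show ?thesis by simp
qed


lemma integrable_ind_cont: "continuous_on {a..b} f \<Longrightarrow> integrable lborel (\<lambda>t. indicator {a..b::real} t * (f::real\<Rightarrow>real) t)"
  using borel_integrable_atLeastAtMost'[of a b f] unfolding set_integrable_def by simp

lemma integral_ind_const: "a \<le> b \<Longrightarrow> integral\<^sup>L lborel (\<lambda>t. indicator {a..b::real} t * c) = (b - a) * c"
proof -
  assume ab: "a \<le> b"
  have "integral\<^sup>L lborel (\<lambda>t. indicator {a..b::real} t * c) = (LBINT t:{a..b}. c)"
    by (simp add: set_lebesgue_integral_def)
  also have "\<dots> = c * b - c * a"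
    by (rule FTC_real[OF ab]) (auto intro!: derivative_eq_intros)
  finally show ?thesis by (simp add: algebra_simps)
qed

lemma abs_c_le: "0 \<le> r \<Longrightarrow> \<bar>2 * r^k * cos (real k * p) / real k\<bar> \<le> 2 * r^k"
proof (cases "k = 0")
  case False
  assume r: "0 \<le> r"
  have "\<bar>2 * r^k * cos (real k * p) / real k\<bar> = 2 * r^k * \<bar>cos (real k * p)\<bar> / real k"
    using r by (simp add: abs_mult)
  also have "\<dots> \<le> 2 * r^k * 1 / 1"
    using False r by (intro frac_le mult_left_mono) auto
  finally show ?thesis by simp
qed simp

lemma reg_int:
  assumes r: "0 \<le> r" "r < 1"
  shows "(LBINT t:{0..pi}. Lr r p t * cos (real n * t)) =
         (if n = 0 then - pi * ln 2 else - pi * r^n * cos (real n * p) / real n)"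
proof -
  define c where "c k = 2 * r^k * cos (real k * p) / real k" for k
  define f where "f k t = indicator {0..pi} t * (c k * (cos (real k * t) * cos (real n * t)))" for k t
  have ser: "(\<lambda>k. f k t) sums (indicator {0..pi} t * ((- Lr r p t - ln 2) * cos (real n * t)))" for t
    using sums_mult[OF sums_mult2[OF Lr_series[OF r, of p t], of "cos (real n * t)"], of "indicator {0..pi} t"]
    unfolding f_def c_def by (simp add: mult.assoc)
  have cb: "\<bar>c k\<bar> \<le> 2 * r^k" for k unfolding c_def by (rule abs_c_le[OF r(1)])
  have bnd: "norm (f k t) \<le> indicator {0..pi} t * (2 * r^k)" for k t
  proof -
    have "\<bar>cos (real k * t) * cos (real n * t)\<bar> \<le> 1"
      by (simp add: abs_mult mult_le_one)
    then have "\<bar>c k * (cos (real k * t) * cos (real n * t))\<bar> \<le> 2 * r^k * 1"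
      unfolding abs_mult using cb[of k] by (intro mult_mono) auto
    then show ?thesis unfolding f_def by (simp add: abs_mult indicator_def)
  qed
  have intf: "integrable lborel (f k)" for k
    unfolding f_def by (rule integrable_ind_cont) (auto intro!: continuous_intros)
  have gs: "summable (\<lambda>k. 2 * r^k)"
    using r by (intro summable_mult summable_geometric) auto
  have summ_pt: "summable (\<lambda>k. norm (f k t))" for t
  proof (rule summable_comparison_test'[OF gs])
    fix k :: nat assume "k \<ge> 0"
    show "norm (norm (f k t)) \<le> 2 * r^k" using bnd[of k t] zero_le_power[OF r(1), of k]
      by (cases "t \<in> {0..pi}") auto
  qed
  have int_norm: "integral\<^sup>L lborel (\<lambda>t. norm (f k t)) \<le> pi * (2 * r^k)" for k
  proof -
    have "integral\<^sup>L lborel (\<lambda>t. norm (f k t)) \<le> integral\<^sup>L lborel (\<lambda>t. indicator {0..pi} t * (2 * r^k))"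
      by (intro integral_mono integrable_norm intf integrable_ind_cont bnd continuous_intros)
    also have "\<dots> = pi * (2 * r^k)" by (subst integral_ind_const) auto
    finally show ?thesis .
  qed
  have summ_int: "summable (\<lambda>k. integral\<^sup>L lborel (\<lambda>t. norm (f k t)))"
  proof (rule summable_comparison_test'[of "\<lambda>k. pi * (2 * r^k)"])
    show "summable (\<lambda>k. pi * (2 * r ^ k))" using gs by (rule summable_mult)
    fix k :: nat assume "k \<ge> 0"
    show "norm (integral\<^sup>L lborel (\<lambda>t. norm (f k t))) \<le> pi * (2 * r ^ k)"
      using int_norm[of k] by simp
  qed
  have intfk: "integral\<^sup>L lborel (f k) = (if k = n then c n * (if n = 0 then pi else pi/2) else 0)" for k
  proof -
    have "integral\<^sup>L lborel (f k) = (LBINT t:{0..pi}. c k * (cos (real k * t) * cos (real n * t)))"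
      unfolding f_def set_lebesgue_integral_def by simp
    also have "\<dots> = c k * (LBINT t:{0..pi}. cos (real k * t) * cos (real n * t))"
      by (rule set_integral_mult_right)
    also have "\<dots> = (if k = n then c n * (if n = 0 then pi else pi/2) else 0)"
      unfolding cos_cos_int by simp
    finally show ?thesis .
  qed
  have "(\<lambda>k. integral\<^sup>L lborel (f k)) sums (c n * (if n = 0 then pi else pi/2))"
    unfolding intfk by (rule sums_single)
  moreover have "(\<lambda>k. integral\<^sup>L lborel (f k)) sums (integral\<^sup>L lborel (\<lambda>t. \<Sum>k. f k t))"
    by (rule sums_integral[OF intf AE_I2[OF summ_pt] summ_int])
  ultimately have I1: "integral\<^sup>L lborel (\<lambda>t. \<Sum>k. f k t) = c n * (if n = 0 then pi else pi/2)"
    using sums_unique2 by blast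
  have intS: "integrable lborel (\<lambda>t. \<Sum>k. f k t)"
    by (rule integrable_suminf[OF intf AE_I2[OF summ_pt] summ_int])
  have pw: "indicator {0..pi} t * (Lr r p t * cos (real n * t)) =
            indicator {0..pi} t * (- ln 2 * cos (real n * t)) - (\<Sum>k. f k t)" for t
    using sums_unique[OF ser[of t]] by (simp add: algebra_simps)
  have "(LBINT t:{0..pi}. Lr r p t * cos (real n * t)) =
        integral\<^sup>L lborel (\<lambda>t. indicator {0..pi} t * (- ln 2 * cos (real n * t)) - (\<Sum>k. f k t))"
    unfolding set_lebesgue_integral_def by (simp add: pw)
  also have "\<dots> = integral\<^sup>L lborel (\<lambda>t. indicator {0..pi} t * (- ln 2 * cos (real n * t))) - c n * (if n = 0 then pi else pi/2)"
  proof -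
    have "integrable lborel (\<lambda>t. indicator {0..pi} t * (- ln 2 * cos (real n * t)))"
      by (rule integrable_ind_cont) (auto intro!: continuous_intros)
    from Bochner_Integration.integral_diff[OF this intS] show ?thesis unfolding I1 .
  qed
  also have "integral\<^sup>L lborel (\<lambda>t. indicator {0..pi} t * (- ln 2 * cos (real n * t))) = - ln 2 * (if n = 0 then pi else 0)"
  proof -
    have "integral\<^sup>L lborel (\<lambda>t. indicator {0..pi} t * (- ln 2 * cos (real n * t))) = (LBINT t:{0..pi}. - ln 2 * cos (real n * t))"
      unfolding set_lebesgue_integral_def by simp
    also have "\<dots> = - ln 2 * (LBINT t:{0..pi}. cos (real n * t))" by (rule set_integral_mult_right)
    finally show ?thesis unfolding cos_int .
  qed
  finally show ?thesis unfolding c_def by auto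
qed


definition LL :: "real \<Rightarrow> real \<Rightarrow> real" where
  "LL p t = ln \<bar>cos t - cos p\<bar>"

definition rs :: "nat \<Rightarrow> real" where "rs j = 1 - 1 / (real j + 2)"

lemma rs_bounds: "1/2 \<le> rs j" "rs j < 1" "0 \<le> rs j"
  unfolding rs_def by (auto simp: field_simps)

lemma rs_lim: "rs \<longlonglongrightarrow> 1"
proof -
  have "(\<lambda>j. 1 / (real j + 2)) \<longlonglongrightarrow> 0"
    by real_asymp
  then have "(\<lambda>j. 1 - 1 / (real j + 2)) \<longlonglongrightarrow> 1 - 0" by (intro tendsto_intros)
  then show ?thesis unfolding rs_def[abs_def] by simp
qed

lemma Lr_cont: assumes "0 \<le> r" "r < 1" shows "continuous_on S (Lr r p)"
proof -
  have pos: "(1 - 2 * r * cos (x+p) + r^2) * (1 - 2 * r * cos (x-p) + r^2) \<noteq> 0" for x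
    using fac_pos[OF assms, of "x+p"] fac_pos[OF assms, of "x-p"] by simp
  show ?thesis unfolding Lr_def[abs_def] using pos by (intro continuous_intros) auto
qed

lemma Lr_upper: assumes "0 \<le> r" "r < 1" shows "Lr r p t \<le> ln 2"
proof -
  define A where "A = 1 - 2 * r * cos (t+p) + r^2"
  define B where "B = 1 - 2 * r * cos (t-p) + r^2"
  have A: "0 < A" "A \<le> 4" unfolding A_def using fac_pos[OF assms] fac_upper[of r] assms by auto
  have B: "0 < B" "B \<le> 4" unfolding B_def using fac_pos[OF assms] fac_upper[of r] assms by auto
  have "A * B \<le> 4 * 4" using A B by (intro mult_mono) auto
  then have "ln (A * B) \<le> ln 16" using A B by (subst ln_le_cancel_iff) auto
  also have "ln 16 = 4 * ln (2::real)"
  proof -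
    have "(16::real) = 2^4" by simp
    then show ?thesis using ln_realpow[of "2::real" 4] by simp
  qed
  finally show ?thesis unfolding Lr_def A_def[symmetric] B_def[symmetric] by simp
qed

lemma ln_sq_abs: "x \<noteq> 0 \<Longrightarrow> ln ((x::real)^2) = 2 * ln \<bar>x\<bar>"
proof -
  assume "x \<noteq> 0"
  have "x^2 = \<bar>x\<bar>^2" by simp
  then show ?thesis using ln_realpow[of "\<bar>x\<bar>" 2] \<open>x \<noteq> 0\<close> by simp
qed

lemma Lr_lower: assumes "1/2 \<le> r" "r < 1" "cos t \<noteq> cos p" shows "LL p t - ln 2 \<le> Lr r p t"
proof -
  define A where "A = 1 - 2 * r * cos (t+p) + r^2"
  define B where "B = 1 - 2 * r * cos (t-p) + r^2"
  define X where "X = r * (2 - 2 * cos (t+p))"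
  define Y where "Y = r * (2 - 2 * cos (t-p))"
  have r0: "0 \<le> r" using assms by simp
  have A: "X \<le> A" unfolding A_def X_def by (rule fac_lower[OF r0])
  have B: "Y \<le> B" unfolding B_def Y_def by (rule fac_lower[OF r0])
  have pa: "0 \<le> 2 - 2 * cos (t+p)" "0 \<le> 2 - 2 * cos (t-p)" using cos_le_one[of "t+p"] cos_le_one[of "t-p"] by auto
  have X0: "0 \<le> X" "0 \<le> Y" unfolding X_def Y_def using pa r0 by simp_all
  have A0: "0 \<le> A" using A X0 by linarith
  have "X * Y \<le> A * B" by (rule mult_mono[OF A B A0 X0(2)])
  moreover have "X * Y = (2*r)^2 * (cos t - cos p)^2"
  proof -
    have "X * Y = r * r * ((2 - 2 * cos (t+p)) * (2 - 2 * cos (t-p)))" unfolding X_def Y_def by (simp add: algebra_simps)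
    also have "\<dots> = (2*r)^2 * (cos t - cos p)^2" unfolding cos_prod_identity by (simp add: power2_eq_square)
    finally show ?thesis .
  qed
  moreover have "1 * (cos t - cos p)^2 \<le> (2*r)^2 * (cos t - cos p)^2"
  proof (rule mult_right_mono)
    show "1 \<le> (2*r)^2" using assms by (intro one_le_power) simp
  qed simp
  ultimately have le: "(cos t - cos p)^2 \<le> A * B" by linarith
  have pos: "0 < (cos t - cos p)^2" using assms by simp
  have ABpos: "0 < A * B" using le pos by linarith
  have "ln ((cos t - cos p)^2) \<le> ln (A * B)" using le pos ABpos by (subst ln_le_cancel_iff) auto
  moreover have "ln ((cos t - cos p)^2) = 2 * LL p t"
    unfolding LL_def using assms by (simp add: ln_sq_abs)
  ultimately show ?thesis unfolding Lr_def A_def[symmetric] B_def[symmetric] by simp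
qed

lemma Lr_abs: assumes "1/2 \<le> r" "r < 1" "cos t \<noteq> cos p" shows "\<bar>Lr r p t\<bar> \<le> \<bar>LL p t\<bar> + ln 2"
  using Lr_lower[OF assms] Lr_upper[of r p t] assms by auto

lemma Lr_tendsto: assumes "cos t \<noteq> cos p" shows "(\<lambda>j. Lr (rs j) p t) \<longlonglongrightarrow> LL p t"
proof -
  define P where "P r = (1 - 2 * r * cos (t+p) + r^2) * (1 - 2 * r * cos (t-p) + r^2)" for r
  have "(\<lambda>j. P (rs j)) \<longlonglongrightarrow> P 1" unfolding P_def by (intro tendsto_intros rs_lim)
  moreover have P1: "P 1 = 4 * (cos t - cos p)^2"
    unfolding P_def using cos_prod_identity[of t p] by (simp add: algebra_simps)
  moreover have "P 1 \<noteq> 0" using P1 assms by simp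
  ultimately have "(\<lambda>j. ln (P (rs j)) / 2 - ln 2) \<longlonglongrightarrow> ln (P 1) / 2 - ln 2"
    by (intro tendsto_intros) auto
  moreover have "ln (P 1) / 2 - ln 2 = LL p t"
  proof -
    have "ln (P 1) = ln 4 + ln ((cos t - cos p)^2)" unfolding P1 using assms by (simp add: ln_mult)
    also have "ln ((cos t - cos p)^2) = 2 * LL p t"
      unfolding LL_def using assms by (simp add: ln_sq_abs)
    also have "ln (4::real) = 2 * ln 2"
      proof -
      have "(4::real) = 2^2" by simp
      then show ?thesis using ln_realpow[of "2::real" 2] by simp
    qed
    finally show ?thesis by (simp add: field_simps)
  qed
  ultimately show ?thesis unfolding Lr_def P_def by simp
qed

lemma LL_le: "LL p t \<le> ln 2"
proof (cases "cos t = cos p")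
  case True then show ?thesis unfolding LL_def by simp
next
  case False
  have "\<bar>cos t - cos p\<bar> \<le> 2" using abs_cos_le_one[of t] abs_cos_le_one[of p] by linarith
  then show ?thesis unfolding LL_def using False by (subst ln_le_cancel_iff) auto
qed

lemma AE_cos_ne:
  assumes "0 \<le> p" "p \<le> pi"
  shows "AE t in lborel. t \<in> {0..pi} \<longrightarrow> cos t \<noteq> cos p"
  using AE_lborel_singleton[of p]
proof eventually_elim
  fix t :: real assume "t \<noteq> p"
  then show "t \<in> {0..pi} \<longrightarrow> cos t \<noteq> cos p" using cos_inj_pi[of t p] assms by auto
qed

lemma LL_measurable[measurable]: "(\<lambda>t. LL p t) \<in> borel_measurable borel"
  unfolding LL_def by measurable

lemma Lr_measurable[measurable]: "(\<lambda>t. Lr r p t) \<in> borel_measurable borel"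
  unfolding Lr_def by measurable

lemma LL_integrable:
  assumes "0 \<le> p" "p \<le> pi"
  shows "integrable lborel (\<lambda>t. indicator {0..pi} t * LL p t)"
proof -
  define g where "g j t = ennreal (indicator {0..pi} t * (ln 2 - Lr (rs j) p t))" for j t
  define h where "h t = indicator {0..pi} t * (ln 2 - LL p t)" for t
  have intg: "integrable lborel (\<lambda>t. indicator {0..pi} t * (ln 2 - Lr (rs j) p t))" for j
    by (rule integrable_ind_cont) (auto intro!: continuous_intros Lr_cont rs_bounds)
  have intval: "integral\<^sup>L lborel (\<lambda>t. indicator {0..pi} t * (ln 2 - Lr (rs j) p t)) = 2 * pi * ln 2" for j
  proof -
    have "integral\<^sup>L lborel (\<lambda>t. indicator {0..pi} t * (ln 2 - Lr (rs j) p t)) =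
          integral\<^sup>L lborel (\<lambda>t. indicator {0..pi} t * ln 2) - (LBINT t:{0..pi}. Lr (rs j) p t * cos (real 0 * t))"
      unfolding set_lebesgue_integral_def
      by (subst Bochner_Integration.integral_diff[symmetric])
         (auto intro!: integrable_ind_cont continuous_intros Lr_cont rs_bounds simp: algebra_simps)
    also have "\<dots> = 2 * pi * ln 2" by (subst reg_int) (auto simp: rs_bounds integral_ind_const)
    finally show ?thesis .
  qed
  have nng: "integral\<^sup>N lborel (g j) = ennreal (2 * pi * ln 2)" for j
  proof -
    have "integral\<^sup>N lborel (g j) = ennreal (integral\<^sup>L lborel (\<lambda>t. indicator {0..pi} t * (ln 2 - Lr (rs j) p t)))"
      unfolding g_def
    proof (rule nn_integral_eq_integral[OF intg], rule AE_I2)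
      fix t show "0 \<le> indicator {0..pi} t * (ln 2 - Lr (rs j) p t)"
        using Lr_upper[OF rs_bounds(3,2), of j p t] by (simp add: indicator_def)
    qed
    then show ?thesis unfolding intval .
  qed
  have lim: "AE t in lborel. (\<lambda>j. g j t) \<longlonglongrightarrow> ennreal (h t)"
    using AE_cos_ne[OF assms]
  proof eventually_elim
    fix t assume A: "t \<in> {0..pi} \<longrightarrow> cos t \<noteq> cos p"
    show "(\<lambda>j. g j t) \<longlonglongrightarrow> ennreal (h t)"
    proof (cases "t \<in> {0..pi}")
      case True
      then show ?thesis unfolding g_def h_def using A
        by (auto intro!: tendsto_intros Lr_tendsto)
    next
      case False then show ?thesis unfolding g_def h_def by simp
    qed
  qed
  have "integral\<^sup>N lborel h = (\<integral>\<^sup>+ t. liminf (\<lambda>j. g j t) \<partial>lborel)"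
    using lim by (intro nn_integral_cong_AE) (auto elim!: eventually_mono simp: lim_imp_Liminf)
  also have "\<dots> \<le> liminf (\<lambda>j. integral\<^sup>N lborel (g j))"
    by (rule nn_integral_liminf) (unfold g_def, measurable)
  also have "\<dots> = ennreal (2 * pi * ln 2)" unfolding nng by (simp add: Liminf_const)
  finally have fin: "integral\<^sup>N lborel h < \<infinity>" using less_le_trans by (simp add: order_le_less_trans)
  have inth: "integrable lborel h"
  proof (rule integrableI_nonneg)
    show "h \<in> borel_measurable lborel" unfolding h_def by measurable
    show "AE x in lborel. 0 \<le> h x" using LL_le[of p] by (intro AE_I2) (simp add: h_def indicator_def)
    show "integral\<^sup>N lborel h < \<infinity>" by (rule fin)
  qed
  have "integrable lborel (\<lambda>t. indicator {0..pi} t * ln 2 - h t)"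
    using inth by (intro Bochner_Integration.integrable_diff integrable_ind_cont) (auto intro!: continuous_intros)
  then show ?thesis unfolding h_def by (simp add: algebra_simps)
qed

lemma K_int:
  assumes "0 \<le> p" "p \<le> pi"
  shows "(LBINT t:{0..pi}. LL p t * cos (real n * t)) =
         (if n = 0 then - pi * ln 2 else - pi * cos (real n * p) / real n)"
proof -
  define s where "s j t = indicator {0..pi} t * (Lr (rs j) p t * cos (real n * t))" for j t
  define f where "f t = indicator {0..pi} t * (LL p t * cos (real n * t))" for t
  define w where "w t = indicator {0..pi} t * \<bar>LL p t\<bar> + indicator {0..pi} t * ln 2" for t
  have intw: "integrable lborel w" unfolding w_def
  proof (intro Bochner_Integration.integrable_add)
    show "integrable lborel (\<lambda>t. indicator {0..pi} t * \<bar>LL p t\<bar>)"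
      using integrable_abs[OF LL_integrable[OF assms]] by (simp add: abs_mult)
    show "integrable lborel (\<lambda>t. indicator {0..pi} t * ln (2::real))"
      by (rule integrable_ind_cont) (auto intro!: continuous_intros)
  qed
  have lim: "AE t in lborel. (\<lambda>j. s j t) \<longlonglongrightarrow> f t"
    using AE_cos_ne[OF assms]
  proof eventually_elim
    fix t assume A: "t \<in> {0..pi} \<longrightarrow> cos t \<noteq> cos p"
    show "(\<lambda>j. s j t) \<longlonglongrightarrow> f t"
    proof (cases "t \<in> {0..pi}")
      case True
      then show ?thesis unfolding s_def f_def using A
        by (auto intro!: tendsto_intros Lr_tendsto)
    next
      case False then show ?thesis unfolding s_def f_def by simp
    qed
  qed
  have bnd: "AE t in lborel. norm (s j t) \<le> w t" for j
    using AE_cos_ne[OF assms]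
  proof eventually_elim
    fix t assume A: "t \<in> {0..pi} \<longrightarrow> cos t \<noteq> cos p"
    show "norm (s j t) \<le> w t"
    proof (cases "t \<in> {0..pi}")
      case True
      have "\<bar>Lr (rs j) p t * cos (real n * t)\<bar> \<le> \<bar>Lr (rs j) p t\<bar> * 1"
        unfolding abs_mult by (intro mult_left_mono) auto
      also have "\<dots> \<le> \<bar>LL p t\<bar> + ln 2" using Lr_abs[OF rs_bounds(1,2)] A True by simp
      finally show ?thesis unfolding s_def w_def using True by simp
    next
      case False then show ?thesis unfolding s_def w_def by simp
    qed
  qed
  have conv: "(\<lambda>j. integral\<^sup>L lborel (s j)) \<longlonglongrightarrow> integral\<^sup>L lborel f"
    by (rule integral_dominated_convergence[OF _ _ intw lim bnd]) (unfold s_def f_def, measurable)+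
  have sj: "integral\<^sup>L lborel (s j) = (if n = 0 then - pi * ln 2 else - pi * rs j ^ n * cos (real n * p) / real n)" for j
    unfolding s_def using reg_int[OF rs_bounds(3,2), of j p n] by (simp add: set_lebesgue_integral_def)
  have "(\<lambda>j. integral\<^sup>L lborel (s j)) \<longlonglongrightarrow> (if n = 0 then - pi * ln 2 else - pi * 1 ^ n * cos (real n * p) / real n)"
  proof (cases "n = 0")
    case False
    have "(\<lambda>j. rs j ^ n) \<longlonglongrightarrow> 1 ^ n" by (intro tendsto_intros rs_lim)
    then have "(\<lambda>j. (- pi * cos (real n * p) / real n) * rs j ^ n) \<longlonglongrightarrow> (- pi * cos (real n * p) / real n) * 1 ^ n"
      by (rule tendsto_mult_left)
    then have "(\<lambda>j. - pi * rs j ^ n * cos (real n * p) / real n) \<longlonglongrightarrow> - pi * 1 ^ n * cos (real n * p) / real n"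
      by (simp add: mult_ac)
    then show ?thesis unfolding sj using False by simp
  qed (simp add: sj)
  with conv have "integral\<^sup>L lborel f = (if n = 0 then - pi * ln 2 else - pi * 1 ^ n * cos (real n * p) / real n)"
    using LIMSEQ_unique by blast
  then show ?thesis unfolding f_def set_lebesgue_integral_def by simp
qed


definition QQ :: "real \<Rightarrow> real \<Rightarrow> real" where
  "QQ w t = (1 - w * cos t) / (1 - 2 * w * cos t + w^2)"

lemma integrable_times_bounded:
  fixes f g :: "real \<Rightarrow> real"
  assumes "integrable lborel f" "g \<in> borel_measurable borel" "\<And>x. \<bar>g x\<bar> \<le> 1"
  shows "integrable lborel (\<lambda>x. f x * g x)"
proof (rule Bochner_Integration.integrable_bound[OF assms(1)])
  show "(\<lambda>x. f x * g x) \<in> borel_measurable lborel"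
    using borel_measurable_integrable[OF assms(1)] assms(2) by measurable
  show "AE x in lborel. norm (f x * g x) \<le> norm (f x)"
    using assms(3) by (intro AE_I2) (simp add: abs_mult mult_left_le)
qed

lemma QQ_series_int:
  assumes w: "0 \<le> w" "w < 1"
  assumes W: "integrable lborel (\<lambda>t. indicator {0..pi} t * W t)"
  shows "(\<lambda>n. w^n * (LBINT t:{0..pi}. W t * cos (real n * t))) sums (LBINT t:{0..pi}. W t * QQ w t)"
proof -
  define F where "F t = indicator {0..pi} t * W t" for t
  define f where "f n t = F t * (w^n * cos (real n * t))" for n t
  have wn: "0 \<le> w^n" "w^n \<le> 1" for n using w by (auto intro: power_le_one)
  have ser: "(\<lambda>n. f n t) sums (F t * QQ w t)" for t
    unfolding f_def QQ_def by (intro sums_mult poisson_series w)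
  have intf: "integrable lborel (f n)" for n
    unfolding f_def F_def
  proof (rule integrable_times_bounded[OF W])
    show "(\<lambda>t. w ^ n * cos (real n * t)) \<in> borel_measurable borel" by measurable
    fix t show "\<bar>w ^ n * cos (real n * t)\<bar> \<le> 1"
      using wn[of n] by (simp add: abs_mult mult_le_one)
  qed
  have nb: "norm (f n t) \<le> w^n * \<bar>F t\<bar>" for n t
  proof -
    have "w^n * \<bar>cos (real n * t)\<bar> \<le> w^n" using wn[of n] by (simp add: mult_left_le)
    then have "\<bar>F t\<bar> * (w^n * \<bar>cos (real n * t)\<bar>) \<le> \<bar>F t\<bar> * w^n" by (rule mult_left_mono) simp
    then show ?thesis using wn[of n] unfolding f_def by (simp add: abs_mult mult.commute)
  qed
  have gs: "summable (\<lambda>n. w^n)" using w by (intro summable_geometric) auto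
  have summ_pt: "summable (\<lambda>n. norm (f n t))" for t
  proof (rule summable_comparison_test'[of "\<lambda>n. w^n * \<bar>F t\<bar>"])
    show "summable (\<lambda>n. w ^ n * \<bar>F t\<bar>)" using gs by (rule summable_mult2)
    fix n :: nat assume "n \<ge> 0" then show "norm (norm (f n t)) \<le> w ^ n * \<bar>F t\<bar>" using nb by simp
  qed
  have intF: "integrable lborel (\<lambda>t. \<bar>F t\<bar>)" unfolding F_def using W by (rule integrable_abs)
  have summ_int: "summable (\<lambda>n. integral\<^sup>L lborel (\<lambda>t. norm (f n t)))"
  proof (rule summable_comparison_test'[of "\<lambda>n. w^n * integral\<^sup>L lborel (\<lambda>t. \<bar>F t\<bar>)"])
    show "summable (\<lambda>n. w ^ n * integral\<^sup>L lborel (\<lambda>t. \<bar>F t\<bar>))" using gs by (rule summable_mult2)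
    fix n :: nat assume "n \<ge> 0"
    have "integral\<^sup>L lborel (\<lambda>t. norm (f n t)) \<le> integral\<^sup>L lborel (\<lambda>t. w^n * \<bar>F t\<bar>)"
      by (intro integral_mono integrable_norm intf integrable_mult_right intF nb)
    then show "norm (integral\<^sup>L lborel (\<lambda>t. norm (f n t))) \<le> w ^ n * integral\<^sup>L lborel (\<lambda>t. \<bar>F t\<bar>)"
      by simp
  qed
  have "(\<lambda>n. integral\<^sup>L lborel (f n)) sums integral\<^sup>L lborel (\<lambda>t. \<Sum>n. f n t)"
    by (rule sums_integral[OF intf AE_I2[OF summ_pt] summ_int])
  moreover have "(\<lambda>t. \<Sum>n. f n t) = (\<lambda>t. F t * QQ w t)" using ser by (intro ext) (rule sums_unique[symmetric])
  moreover have "integral\<^sup>L lborel (f n) = w^n * (LBINT t:{0..pi}. W t * cos (real n * t))" for n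
  proof -
    have "integral\<^sup>L lborel (f n) = (LBINT t:{0..pi}. w^n * (W t * cos (real n * t)))"
      unfolding f_def F_def set_lebesgue_integral_def by (simp add: mult_ac)
    then show ?thesis by simp
  qed
  moreover have "integral\<^sup>L lborel (\<lambda>t. F t * QQ w t) = (LBINT t:{0..pi}. W t * QQ w t)"
    unfolding F_def set_lebesgue_integral_def by (simp add: mult_ac)
  ultimately show ?thesis by simp
qed

lemma LL_QQ_int:
  assumes p: "0 \<le> p" "p \<le> pi" and w: "0 \<le> w" "w < 1"
  shows "(LBINT t:{0..pi}. LL p t * QQ w t) = pi * ln (1 - 2 * w * cos p + w^2) / 2 - pi * ln 2"
proof -
  have A: "(\<lambda>n. w^n * (LBINT t:{0..pi}. LL p t * cos (real n * t))) sums (LBINT t:{0..pi}. LL p t * QQ w t)"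
    by (rule QQ_series_int[OF w LL_integrable[OF p]])
  have eq: "w^n * (LBINT t:{0..pi}. LL p t * cos (real n * t)) =
        - pi * (w^n * cos (real n * p) / real n) + (if n = 0 then - pi * ln 2 else 0)" for n
    unfolding K_int[OF p] by auto
  have B: "(\<lambda>n. - pi * (w^n * cos (real n * p) / real n) + (if n = 0 then - pi * ln 2 else 0)) sums
           (- pi * (- ln (1 - 2 * w * cos p + w^2) / 2) + - pi * ln 2)"
    by (intro sums_add sums_mult log_series w) (use sums_single[of 0 "\<lambda>_. - pi * ln 2"] in simp)
  from A B show ?thesis unfolding eq using sums_unique2 by fastforce
qed

lemma QQ_int:
  assumes w: "0 \<le> w" "w < 1"
  shows "(LBINT t:{0..pi}. QQ w t) = pi"
proof -
  have W: "integrable lborel (\<lambda>t. indicator {0..pi} t * (1::real))"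
    by (rule integrable_ind_cont) auto
  have A: "(\<lambda>n. w^n * (LBINT t:{0..pi}. 1 * cos (real n * t))) sums (LBINT t:{0..pi}. 1 * QQ w t)"
    by (rule QQ_series_int[OF w W])
  have eq: "w^n * (LBINT t:{0..pi}. 1 * cos (real n * t)) = (if n = 0 then pi else 0)" for n
    unfolding mult_1 cos_int by auto
  from A[unfolded eq] have "(\<lambda>n. if n = 0 then pi else 0) sums (LBINT t:{0..pi}. QQ w t)" by simp
  moreover have "(\<lambda>n. if n = 0 then pi else 0) sums pi" using sums_single[of 0 "\<lambda>_. pi"] by simp
  ultimately show ?thesis using sums_unique2 by blast
qed


lemma integrable_times_boundedB:
  fixes f g :: "real \<Rightarrow> real"
  assumes "integrable lborel f" "g \<in> borel_measurable borel" "\<And>x. \<bar>g x\<bar> \<le> B"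
  shows "integrable lborel (\<lambda>x. f x * g x)"
proof (rule Bochner_Integration.integrable_bound[OF integrable_mult_right[OF assms(1), of B]])
  show "(\<lambda>x. f x * g x) \<in> borel_measurable lborel"
    using borel_measurable_integrable[OF assms(1)] assms(2) by measurable
  have B: "0 \<le> B" using assms(3)[of 0] by linarith
  show "AE x in lborel. norm (f x * g x) \<le> norm (B * f x)"
    using assms(3) B by (intro AE_I2) (simp add: abs_mult mult.commute[of B] mult_left_mono)
qed

lemma QQ_bound: assumes "0 \<le> w" "w < 1" shows "\<bar>QQ w t\<bar> \<le> 2 / (1-w)^2"
proof -
  have d: "(1-w)^2 \<le> 1 - 2 * w * cos t + w^2" using fac_id[of w t] assms cos_le_one[of t]
    by (simp add: mult_nonneg_nonneg)
  have d0: "0 < (1-w)^2" using assms by simp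
  have n: "\<bar>1 - w * cos t\<bar> \<le> 2"
  proof -
    have "\<bar>w * cos t\<bar> \<le> 1" using assms by (simp add: abs_mult mult_le_one)
    then show ?thesis by linarith
  qed
  have dp: "0 < 1 - 2 * w * cos t + w^2" using d d0 by linarith
  have "\<bar>QQ w t\<bar> = \<bar>1 - w * cos t\<bar> / (1 - 2 * w * cos t + w^2)"
    unfolding QQ_def abs_divide abs_of_pos[OF dp] ..
  also have "\<dots> \<le> 2 / (1-w)^2" using n d d0 by (intro frac_le) auto
  finally show ?thesis .
qed

lemma QQ_measurable[measurable]: "QQ w \<in> borel_measurable borel"
  unfolding QQ_def[abs_def] by measurable

lemma set_int_LL_times:
  assumes p: "0 \<le> p" "p \<le> pi"
  assumes "h \<in> borel_measurable borel" "\<And>t. \<bar>h t\<bar> \<le> B"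
  shows "set_integrable lborel {0..pi} (\<lambda>t. LL p t * h t)"
  unfolding set_integrable_def
  using integrable_times_boundedB[OF LL_integrable[OF p] assms(3,4)] by (simp add: mult_ac)

lemma set_int_cont2: "continuous_on {0..pi} f \<Longrightarrow> set_integrable lborel {0..pi::real} (f::real\<Rightarrow>real)"
  by (rule borel_integrable_atLeastAtMost')

lemma QQ_cont: assumes "0 \<le> w" "w < 1" shows "continuous_on S (QQ w)"
proof -
  have "1 - 2 * w * cos t + w^2 \<noteq> 0" for t using fac_pos[OF assms, of t] by simp
  then show ?thesis unfolding QQ_def[abs_def] by (intro continuous_intros) auto
qed

lemma theta_integral:
  assumes p: "0 \<le> p" "p \<le> pi" and w: "0 \<le> w" "w < 1"
  shows "(LBINT t:{0..pi}. (c0 + LL p t) * (A + B * cos t + C * cos (2 * t) + D * QQ w t)) =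
     c0 * (A * pi + D * pi) + A * (- pi * ln 2) + B * (- pi * cos p) + C * (- pi * cos (2 * p) / 2)
     + D * (pi * ln (1 - 2 * w * cos p + w^2) / 2 - pi * ln 2)"
proof -
  have K0: "(LBINT t:{0..pi}. LL p t) = - pi * ln 2" using K_int[OF p, of 0] by simp
  have K1: "(LBINT t:{0..pi}. LL p t * cos t) = - pi * cos p" using K_int[OF p, of 1] by simp
  have K2: "(LBINT t:{0..pi}. LL p t * cos (2 * t)) = - pi * cos (2 * p) / 2" using K_int[OF p, of 2] by simp
  have KQ: "(LBINT t:{0..pi}. LL p t * QQ w t) = pi * ln (1 - 2 * w * cos p + w^2) / 2 - pi * ln 2"
    by (rule LL_QQ_int[OF p w])
  have C0: "(LBINT t:{0..pi}. cos t) = 0" using cos_int[of 1] by simp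
  have C2: "(LBINT t:{0..pi}. cos (2 * t)) = 0" using cos_int[of 2] by simp
  have C1: "(LBINT t:{0..pi}. (1::real)) = pi" using cos_int[of 0] by simp
  have Q0: "(LBINT t:{0..pi}. QQ w t) = pi" by (rule QQ_int[OF w])
  have iL: "set_integrable lborel {0..pi} (\<lambda>t. LL p t)"
    using set_int_LL_times[OF p, of "\<lambda>_. 1" 1] by simp
  have iL1: "set_integrable lborel {0..pi} (\<lambda>t. LL p t * cos t)"
    by (rule set_int_LL_times[OF p, of _ 1]) auto
  have iL2: "set_integrable lborel {0..pi} (\<lambda>t. LL p t * cos (2 * t))"
    by (rule set_int_LL_times[OF p, of _ 1]) auto
  have iLQ: "set_integrable lborel {0..pi} (\<lambda>t. LL p t * QQ w t)"
    by (rule set_int_LL_times[OF p, of _ "2 / (1-w)^2"]) (auto intro: QQ_bound[OF w])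
  have ic: "set_integrable lborel {0..pi} (\<lambda>t. c0 * (A + B * cos t + C * cos (2 * t) + D * QQ w t))"
    by (rule set_int_cont2) (auto intro!: continuous_intros QQ_cont[OF w])
  have eq: "(c0 + LL p t) * (A + B * cos t + C * cos (2 * t) + D * QQ w t) =
     c0 * (A + B * cos t + C * cos (2 * t) + D * QQ w t) + (A * LL p t + (B * (LL p t * cos t) + (C * (LL p t * cos (2 * t)) + D * (LL p t * QQ w t))))" for t
    by (simp add: algebra_simps)
  have "(LBINT t:{0..pi}. c0 * (A + B * cos t + C * cos (2 * t) + D * QQ w t)) = c0 * (A * pi + D * pi)"
  proof -
    have "(LBINT t:{0..pi}. c0 * (A + B * cos t + C * cos (2 * t) + D * QQ w t)) =
       c0 * ((LBINT t:{0..pi}. A * 1) + (LBINT t:{0..pi}. B * cos t) + (LBINT t:{0..pi}. C * cos (2 * t)) + (LBINT t:{0..pi}. D * QQ w t))"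
      by (subst set_integral_mult_right, subst set_integral_add, (auto intro!: set_int_cont2 continuous_intros QQ_cont[OF w])[2])+
         (simp add: set_integral_add set_int_cont2 continuous_intros QQ_cont[OF w])
    also have "\<dots> = c0 * (A * pi + D * pi)" by (simp only: set_integral_mult_right C0 C1 C2 Q0) simp
    finally show ?thesis .
  qed
  moreover have "(LBINT t:{0..pi}. A * LL p t + (B * (LL p t * cos t) + (C * (LL p t * cos (2 * t)) + D * (LL p t * QQ w t))))
     = A * (- pi * ln 2) + (B * (- pi * cos p) + (C * (- pi * cos (2 * p) / 2) + D * (pi * ln (1 - 2 * w * cos p + w^2) / 2 - pi * ln 2)))"
    apply (subst set_integral_add(2), rule set_integrable_mult_right[OF iL],
           (intro set_integral_add(1) set_integrable_mult_right iL1 iL2 iLQ))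
    apply (subst set_integral_add(2), rule set_integrable_mult_right[OF iL1],
           (intro set_integral_add(1) set_integrable_mult_right iL2 iLQ))
    apply (subst set_integral_add(2), rule set_integrable_mult_right[OF iL2],
           (intro set_integral_add(1) set_integrable_mult_right iLQ))
    apply (simp only: set_integral_mult_right K0 K1 K2 KQ)
    done
  moreover have "set_integrable lborel {0..pi} (\<lambda>t. A * LL p t + (B * (LL p t * cos t) + (C * (LL p t * cos (2 * t)) + D * (LL p t * QQ w t))))"
    by (intro set_integral_add(1) set_integrable_mult_right iL iL1 iL2 iLQ)
  ultimately show ?thesis
    unfolding eq by (subst set_integral_add(2)[OF ic]) (simp_all add: algebra_simps)
qed


lemma final_algebra:
  fixes A B al x L2 Lr Lp Lx LF c c2 :: real
  assumes AB: "0 < A" "A < B"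
  assumes a_def: "a = A^2" and b_def: "b = B^2"
  defines "m \<equiv> (a + b) / 2" and "r \<equiv> (b - a) / 2"
  assumes c: "c = (m - x) / r" and c2: "c2 = 2 * c^2 - 1"
  assumes LF: "LF = L2 + Lp + Lx - Lr"
  assumes Lbma: "ln (b - a) = Lr + L2" and Lq: "ln ((b - a) / 4) = Lr - L2"
  assumes Lrho: "ln ((B + A) / (B - A)) = - Lp"
  shows "- (Lr * ((r / (2 * pi) * (2 * b - r) + al / pi * (1 + A / B)) * pi + (- 2 * al / pi) * pi)
          + (r / (2 * pi) * (2 * b - r) + al / pi * (1 + A / B)) * (- pi * L2)
          + (r / (2 * pi) * (2 * m)) * (- pi * c)
          + (- (r / (2 * pi) * r)) * (- pi * c2 / 2)
          + (- 2 * al / pi) * (pi * LF / 2 - pi * L2))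
        + 1/2 * (x^2 + 2 * al * (- Lx))
     = - 1/16 * (a^2 + 6*a*b + b^2 + 2 * (a - b)^2 * ln ((b - a) / 4) - 4 * (a + b)^2
                 + 4 * (b^2 - a^2) * ln ((b - a) / 4))
       - al / (A * B) * ((a + b) / 2 - (b - a) / 2 * ln ((b - a) / 4)
                 - (a + b) * (1/2 + L2 - 1/2 * ln (b - a))
                 + (A * B) * ln ((B + A) / (B - A)))"
    (is "?L = ?R")
proof -
  have r0: "r \<noteq> 0" unfolding r_def a_def b_def using AB by (simp add: power_strict_mono)
  have B0: "B \<noteq> 0" "A \<noteq> 0" using AB by auto
  have p0: "pi \<noteq> 0" by simp
  define k where "k = A / B"
  define N where "N = - (r * (2 * b - r) / 2) * (Lr - L2) + m^2/2 + r^2/4 + al * (Lp - k * (Lr - L2))"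
  have E1: "?L = - Lr * (r * (2 * b - r) / 2 + al * k - al) + (r * (2 * b - r) / 2 + al * (1 + k)) * L2
       + r * m * c - r^2 * c2 / 4 + al * (LF - 2 * L2) + x^2/2 - al * Lx"
    unfolding k_def[symmetric] using p0 by (simp add: field_simps power2_eq_square)
  have E2: "r * m * c - r^2 * c2 / 4 = m^2/2 + r^2/4 - x^2/2"
    unfolding c2 c using r0 by (simp add: field_simps power2_eq_square)
  have E3: "- Lr * (r * (2 * b - r) / 2 + al * k - al) + (r * (2 * b - r) / 2 + al * (1 + k)) * L2
       + r * m * c - r^2 * c2 / 4 + al * (LF - 2 * L2) + x^2/2 - al * Lx = N"
    unfolding LF N_def using E2 by (simp add: field_simps)
  have LN: "?L = N" using E1 E3 by simp
  have a_ab: "a / (A * B) = A / B" unfolding a_def using B0 by (simp add: power2_eq_square)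
  have R1: "?R = - 1/16 * (a^2 + 6*a*b + b^2 - 4 * (a + b)^2 + (2 * (a - b)^2 + 4 * (b^2 - a^2)) * (Lr - L2))
       - al * (a / (A * B)) * (Lr - L2) + al * Lp"
    unfolding Lbma Lq Lrho using B0 by (simp add: field_simps)
  have RN: "?R = N" unfolding R1 a_ab N_def m_def r_def k_def using B0 by (simp add: field_simps power2_eq_square)
  show ?thesis using LN RN by simp
qed

lemma final_algebra2:
  fixes A B al x L2 Lr Lp Lx LF c c2 a b Ap Bp Cp Dp :: real
  assumes AB: "0 < A" "A < B"
  assumes a_def: "a = A^2" and b_def: "b = B^2"
  assumes c: "c = ((a + b) / 2 - x) / ((b - a) / 2)" and c2: "c2 = 2 * c^2 - 1"
  assumes LF: "LF = L2 + Lp + Lx - Lr"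
  assumes Lbma: "ln (b - a) = Lr + L2" and Lq: "ln ((b - a) / 4) = Lr - L2"
  assumes Lrho: "ln ((B + A) / (B - A)) = - Lp"
  assumes Ap: "Ap = (b - a) / 2 / (2 * pi) * (2 * b - (b - a) / 2) + al / pi * (1 + A / B)"
      and Bp: "Bp = (b - a) / 2 / (2 * pi) * (2 * ((a + b) / 2))"
      and Cp: "Cp = - ((b - a) / 2 / (2 * pi) * ((b - a) / 2))"
      and Dp: "Dp = - 2 * al / pi"
  shows "- (Lr * (Ap * pi + Dp * pi) + Ap * (- pi * L2) + Bp * (- pi * c) + Cp * (- pi * c2 / 2)
           + Dp * (pi * LF / 2 - pi * L2)) + 1/2 * (x^2 + 2 * al * (- Lx))
     = - 1/16 * (a^2 + 6*a*b + b^2 + 2 * (a - b)^2 * ln ((b - a) / 4) - 4 * (a + b)^2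
                 + 4 * (b^2 - a^2) * ln ((b - a) / 4))
       - al / (A * B) * ((a + b) / 2 - (b - a) / 2 * ln ((b - a) / 4)
                 - (a + b) * (1/2 + L2 - 1/2 * ln (b - a))
                 + (A * B) * ln ((B + A) / (B - A)))"
  using final_algebra[OF AB a_def b_def c c2 LF Lbma Lq Lrho, of al] unfolding Ap Bp Cp Dp
  by (simp add: algebra_simps)


lemma part2_alg:
  fixes A B c :: real
  assumes AB: "0 < A" "A < B" and c: "c < 1"
  defines "m \<equiv> (A^2 + B^2) / 2" and "r \<equiv> (B^2 - A^2) / 2" and "\<rho> \<equiv> (B - A) / (B + A)"
  shows "- r * (1 + c) * (A / B) / (m - r * c) = 1 + A / B - r * (1 - \<rho> * c) / (\<rho> * (m - r * c))"
proof -
  have r0: "0 < r" unfolding r_def using AB by (simp add: power_strict_mono)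
  have t0: "0 < m - r * c"
  proof -
    have "r * c < r * 1" using r0 c by simp
    moreover have "m - r = A^2" unfolding m_def r_def by (simp add: field_simps)
    ultimately show ?thesis using AB by (smt (verit) zero_less_power)
  qed
  have rho0: "\<rho> \<noteq> 0" "B + A \<noteq> 0" "B \<noteq> 0" unfolding \<rho>_def using AB by auto
  define t where "t = m - r * c"
  have BA: "B - A \<noteq> 0" using AB by simp
  have r_rho: "r / \<rho> = (B + A)^2 / 2"
    unfolding r_def \<rho>_def using rho0 BA by (simp add: field_simps power2_eq_square)
  have e1: "r * (1 - \<rho> * c) / (\<rho> * t) = ((B + A)^2 / 2 - r * c) / t"
  proof -
    have "r * (1 - \<rho> * c) / \<rho> = r / \<rho> - r * c" using rho0 by (simp add: field_simps)
    then have "r * (1 - \<rho> * c) / (\<rho> * t) = (r / \<rho> - r * c) / t" by (metis divide_divide_eq_left)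
    then show ?thesis unfolding r_rho .
  qed
  have e2: "- r * (1 + c) * A = (B + A) * t - B * (B + A)^2 / 2 + B * r * c"
    unfolding t_def m_def r_def by (simp add: field_simps power2_eq_square)
  have "- r * (1 + c) * (A / B) / t = 1 + A / B - ((B + A)^2 / 2 - r * c) / t"
    using t0 rho0 e2 unfolding t_def[symmetric] by (simp add: field_simps)
  then show ?thesis unfolding t_def[symmetric] e1 .
qed

lemma sqrt_ratio_theta:
  assumes "0 < t" "t < pi"
  shows "sqrt ((1 + cos t) / (1 - cos t)) = (1 + cos t) / sin t"
proof -
  have s: "0 < sin t" using assms by (simp add: sin_gt_zero)
  have c: "cos t < 1" "-1 < cos t" using assms cos_monotone_0_pi[of 0 t] cos_monotone_0_pi[of t pi] by auto
  have "((1 + cos t) / sin t)^2 = (1 + cos t) / (1 - cos t)"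
  proof -
    have e: "sin t ^ 2 = (1 - cos t) * (1 + cos t)" by (simp add: sin_squared_eq power2_eq_square algebra_simps)
    have "((1 + cos t) / sin t)^2 = (1 + cos t)^2 / sin t ^ 2" by (simp add: power_divide)
    also have "\<dots> = (1 + cos t) * (1 + cos t) / ((1 - cos t) * (1 + cos t))" unfolding e by (simp add: power2_eq_square)
    also have "\<dots> = (1 + cos t) / (1 - cos t)" using c by simp
    finally show ?thesis .
  qed
  moreover have "0 \<le> (1 + cos t) / sin t" using s c by simp
  ultimately show ?thesis by (metis real_sqrt_unique)
qed

lemma density_theta:
  fixes al a b t :: real
  assumes ab: "0 < a" "a < b" and th: "0 < t" "t < pi"
  defines "m \<equiv> (a+b)/2" and "r \<equiv> (b-a)/2" and "\<rho> \<equiv> (sqrt b - sqrt a) / (sqrt b + sqrt a)"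
  shows "nu_density al a b (m - r * cos t) * (r * sin t) =
     r / (2*pi) * (2*b - r + 2*m*cos t - r*cos (2*t)) + al/pi * (1 + sqrt a / sqrt b - 2 * QQ \<rho> t)"
proof -
  define A where "A = sqrt a"
  define B where "B = sqrt b"
  have AB: "0 < A" "A < B" unfolding A_def B_def using ab by auto
  have a: "a = A^2" and b: "b = B^2" unfolding A_def B_def using ab by auto
  define c where "c = cos t"
  define s where "s = sin t"
  have s0: "0 < s" unfolding s_def using th by (simp add: sin_gt_zero)
  have c1: "c < 1" "-1 < c" unfolding c_def using th cos_monotone_0_pi[of 0 t] cos_monotone_0_pi[of t pi] by auto
  have r0: "0 < r" unfolding r_def using ab by simp
  define T where "T = m - r * c"
  have T0: "0 < T"
  proof -
    have "r * c < r * 1" using r0 c1 by simp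
    moreover have "m - r = a" unfolding m_def r_def by (simp add: field_simps)
    ultimately show ?thesis unfolding T_def using ab by linarith
  qed
  have bT: "b - T = r * (1 + c)" and Ta: "T - a = r * (1 - c)"
    unfolding T_def m_def r_def by (simp_all add: field_simps)
  have sq: "sqrt ((b - T) / (T - a)) = (1 + c) / s"
    unfolding bT Ta using r0 sqrt_ratio_theta[OF th] unfolding c_def s_def by simp
  have sab: "sqrt (a / b) = A / B" unfolding A_def B_def by (simp add: real_sqrt_divide)
  have rho0: "\<rho> \<noteq> 0" unfolding \<rho>_def A_def[symmetric] B_def[symmetric] using AB by simp
  have den: "1 - 2 * \<rho> * c + \<rho>^2 = 2 * \<rho> * T / r"
  proof -
    have BA: "B - A \<noteq> 0" "B + A \<noteq> 0" using AB by auto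
    have h: "\<rho> * (B + A) = B - A" unfolding \<rho>_def A_def[symmetric] B_def[symmetric] using BA by simp
    have key: "((B+A)^2 + (B-A)^2) * r = 2 * (B - A) * (B + A) * m"
      unfolding m_def r_def a b by (simp add: field_simps power2_eq_square)
    have "(B+A)^2 * ((1 + \<rho>^2) * r) = ((B+A)^2 + (\<rho> * (B+A))^2) * r" by (simp add: algebra_simps power2_eq_square)
    also have "\<dots> = 2 * (B - A) * (B + A) * m" unfolding h key ..
    also have "\<dots> = 2 * (B + A) * (\<rho> * (B + A)) * m" unfolding h by (simp only: mult_ac)
    also have "\<dots> = (B+A)^2 * (2 * \<rho> * m)" by (simp add: algebra_simps power2_eq_square)
    finally have "(1 + \<rho>^2) * r = 2 * \<rho> * m" using BA by simp
    then show ?thesis unfolding T_def using r0 by (simp add: field_simps)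
  qed
  have QQe: "QQ \<rho> t = r * (1 - \<rho> * c) / (2 * \<rho> * T)"
    unfolding QQ_def c_def[symmetric] den using r0 rho0 T0 by (simp add: field_simps)
  have p2: "- r * (1 + c) * (A / B) / T = 1 + A / B - r * (1 - \<rho> * c) / (\<rho> * T)"
    using part2_alg[OF AB c1(1)] unfolding T_def m_def r_def \<rho>_def A_def[symmetric] B_def[symmetric] unfolding a b .
  have c2: "cos (2 * t) = 2 * c^2 - 1" unfolding c_def by (rule cos_double_cos)
  have p1: "(1 + c) * (2 * T + 2 * r) = 2*b - r + 2*m*c - r * (2 * c^2 - 1)"
    unfolding T_def m_def r_def by (simp add: field_simps power2_eq_square)
  have "nu_density al a b (m - r * cos t) * (r * sin t)
      = 1 / (2 * pi) * ((1 + c) / s) * (2 * T + b - a - 2 * al * (A / B) * (1 / T)) * (r * s)"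
    unfolding nu_density_def c_def[symmetric] s_def[symmetric] T_def[symmetric] sq sab ..
  also have "\<dots> = r / (2 * pi) * ((1 + c) * (2 * T + 2 * r)) + al / pi * (- r * (1 + c) * (A / B) / T)"
    using s0 T0 AB pi_gt_zero unfolding r_def by (simp add: field_simps)
  also have "\<dots> = r / (2*pi) * (2*b - r + 2*m*c - r*(2 * c^2 - 1)) + al/pi * (1 + A / B - 2 * (r * (1 - \<rho> * c) / (2 * \<rho> * T)))"
    unfolding p1 p2 by simp
  also have "\<dots> = r / (2*pi) * (2*b - r + 2*m*cos t - r*cos (2*t)) + al/pi * (1 + sqrt a / sqrt b - 2 * QQ \<rho> t)"
    unfolding c2 QQe A_def B_def c_def ..
  finally show ?thesis .
qed


lemma theta_integrable:
  assumes p: "0 \<le> p" "p \<le> pi" and w: "0 \<le> w" "w < 1"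
  shows "set_integrable lborel {0..pi} (\<lambda>t. (c0 + LL p t) * (A + B * cos t + C * cos (2 * t) + D * QQ w t))"
proof -
  have iL: "set_integrable lborel {0..pi} (\<lambda>t. LL p t * (A + B * cos t + C * cos (2 * t) + D * QQ w t))"
  proof (rule set_int_LL_times[OF p])
    show "(\<lambda>t. A + B * cos t + C * cos (2 * t) + D * QQ w t) \<in> borel_measurable borel" by measurable
    fix t
    have "\<bar>A + B * cos t + C * cos (2 * t) + D * QQ w t\<bar> \<le> \<bar>A\<bar> + \<bar>B\<bar> * 1 + \<bar>C\<bar> * 1 + \<bar>D\<bar> * (2 / (1-w)^2)"
    proof -
      have "\<bar>A + B * cos t + C * cos (2 * t) + D * QQ w t\<bar> \<le> \<bar>A\<bar> + \<bar>B * cos t\<bar> + \<bar>C * cos (2 * t)\<bar> + \<bar>D * QQ w t\<bar>"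
        by linarith
      also have "\<dots> \<le> \<bar>A\<bar> + \<bar>B\<bar> * 1 + \<bar>C\<bar> * 1 + \<bar>D\<bar> * (2 / (1-w)^2)"
        unfolding abs_mult using QQ_bound[OF w, of t]
        by (intro add_mono mult_left_mono) auto
      finally show ?thesis .
    qed
    then show "\<bar>A + B * cos t + C * cos (2 * t) + D * QQ w t\<bar> \<le> \<bar>A\<bar> + \<bar>B\<bar> * 1 + \<bar>C\<bar> * 1 + \<bar>D\<bar> * (2 / (1-w)^2)" .
  qed
  have ic: "set_integrable lborel {0..pi} (\<lambda>t. c0 * (A + B * cos t + C * cos (2 * t) + D * QQ w t))"
    by (rule set_int_cont2) (auto intro!: continuous_intros QQ_cont[OF w])
  have "set_integrable lborel {0..pi} (\<lambda>t. c0 * (A + B * cos t + C * cos (2 * t) + D * QQ w t) + LL p t * (A + B * cos t + C * cos (2 * t) + D * QQ w t))"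
    by (rule set_integral_add(1)[OF ic iL])
  then show ?thesis by (simp add: distrib_right)
qed

lemma nu_measurable[measurable]: "(\<lambda>t. nu_density al a b t) \<in> borel_measurable borel"
  unfolding nu_density_def by measurable

lemma main_identity:
  fixes al a b x :: real
  assumes ab: "0 < a" "a < b" and x: "a < x" "x \<le> b"
  shows "(LINT t:{a<..b}|lborel. ln (1 / \<bar>x - t\<bar>) * nu_density al a b t)
       + 1/2 * (x^2 + 2 * al * ln (1 / x))
     = - 1/16 * (a^2 + 6*a*b + b^2 + 2 * (a - b)^2 * ln ((b - a) / 4) - 4 * (a + b)^2
                 + 4 * (b^2 - a^2) * ln ((b - a) / 4))
       - al / sqrt (a * b) * ((a + b) / 2 - (b - a) / 2 * ln ((b - a) / 4)
                 - (a + b) * (1/2 + ln 2 - 1/2 * ln (b - a))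
                 + sqrt (a * b) * ln ((sqrt b + sqrt a) / (sqrt b - sqrt a)))"
proof -
  define m where "m = (a + b) / 2"
  define r where "r = (b - a) / 2"
  define A where "A = sqrt a"
  define B where "B = sqrt b"
  define \<rho> where "\<rho> = (sqrt b - sqrt a) / (sqrt b + sqrt a)"
  have AB: "0 < A" "A < B" unfolding A_def B_def using ab by auto
  have aA: "a = A^2" and bB: "b = B^2" unfolding A_def B_def using ab by auto
  have r0: "0 < r" unfolding r_def using ab by simp
  have BA: "0 < B + A" "0 < B - A" using AB by auto
  have rho: "0 < \<rho>" "\<rho> < 1" unfolding \<rho>_def A_def[symmetric] B_def[symmetric] using BA AB by (auto simp: field_simps)
  define cp where "cp = (m - x) / r"
  have cp: "-1 \<le> cp" "cp < 1" unfolding cp_def m_def r_def using x ab by (auto simp: field_simps)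
  define p where "p = arccos cp"
  have p: "0 \<le> p" "p \<le> pi" unfolding p_def using cp by (auto intro: arccos_lbound arccos_ubound)
  have cosp: "cos p = cp" unfolding p_def using cp by (simp add: cos_arccos)
  define Ap where "Ap = r / (2 * pi) * (2 * b - r) + al / pi * (1 + A / B)"
  define Bp where "Bp = r / (2 * pi) * (2 * m)"
  define Cp where "Cp = - (r / (2 * pi) * r)"
  define Dp where "Dp = - 2 * al / pi"
  define G where "G t = (ln r + LL p t) * (Ap + Bp * cos t + Cp * cos (2 * t) + Dp * QQ \<rho> t)" for t
  define F where "F t = ln (1 / \<bar>x - t\<bar>) * nu_density al a b t" for t
  define g where "g t = m - r * cos t" for t
  define g' where "g' t = r * sin t" for t
  have intG: "set_integrable lborel {0..pi} G"
    unfolding G_def by (rule theta_integrable[OF p less_imp_le[OF rho(1)] rho(2)])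
  have IG: "(LBINT t:{0..pi}. G t) = ln r * (Ap * pi + Dp * pi) + Ap * (- pi * ln 2) + Bp * (- pi * cos p)
        + Cp * (- pi * cos (2 * p) / 2) + Dp * (pi * ln (1 - 2 * \<rho> * cos p + \<rho>^2) / 2 - pi * ln 2)"
    unfolding G_def by (rule theta_integral[OF p less_imp_le[OF rho(1)] rho(2)])
  have pw: "F (g t) * g' t = - G t" if t: "0 < t" "t < pi" "t \<noteq> p" for t
  proof -
    have ne: "cos t \<noteq> cos p" using cos_inj_pi[of t p] t p by auto
    have xt: "x - g t = r * (cos t - cos p)" unfolding g_def cosp cp_def using r0 by (simp add: field_simps)
    have "\<bar>x - g t\<bar> = r * \<bar>cos t - cos p\<bar>" unfolding xt using r0 by (simp add: abs_mult)
    then have L: "ln (1 / \<bar>x - g t\<bar>) = - (ln r + LL p t)"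
      unfolding LL_def using r0 ne by (simp add: ln_div ln_mult)
    have D: "nu_density al a b (g t) * g' t = Ap + Bp * cos t + Cp * cos (2 * t) + Dp * QQ \<rho> t"
      unfolding g_def g'_def m_def r_def \<rho>_def density_theta[OF ab t(1,2)]
      unfolding Ap_def Bp_def Cp_def Dp_def r_def[symmetric] m_def[symmetric] A_def B_def
      by (simp add: field_simps)
    have "F (g t) * g' t = ln (1 / \<bar>x - g t\<bar>) * (nu_density al a b (g t) * g' t)"
      unfolding F_def by (simp only: mult.assoc)
    also have "\<dots> = - (ln r + LL p t) * (Ap + Bp * cos t + Cp * cos (2 * t) + Dp * QQ \<rho> t)"
      by (simp only: L D)
    finally show ?thesis unfolding G_def by (simp only: minus_mult_left)
  qed
  have g0: "g 0 = a" "g pi = b" unfolding g_def m_def r_def by (simp_all add: field_simps)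
  have derivg: "(g has_real_derivative g' t) (at t)" for t
    unfolding g_def g'_def by (auto intro!: derivative_eq_intros)
  have contg': "continuous_on {0..pi} g'" unfolding g'_def by (intro continuous_intros)
  have g'nn: "0 \<le> g' t" if "t \<in> {0..pi}" for t
    unfolding g'_def using that r0 by (auto intro!: mult_nonneg_nonneg sin_ge_zero)
  have Fmeas[measurable]: "F \<in> borel_measurable borel" unfolding F_def by measurable
  have AEpw: "AE t in lborel. F (g t) * g' t * indicator {0..pi} t = - (indicator {0..pi} t * G t)"
    using AE_lborel_singleton[of 0] AE_lborel_singleton[of pi] AE_lborel_singleton[of p]
  proof eventually_elim
    fix t :: real assume t: "t \<noteq> 0" "t \<noteq> pi" "t \<noteq> p"
    show "F (g t) * g' t * indicator {0..pi} t = - (indicator {0..pi} t * G t)"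
    proof (cases "t \<in> {0..pi}")
      case True
      then have "0 < t" "t < pi" using t by auto
      then show ?thesis using pw[of t] t True by simp
    qed simp
  qed
  have nnG: "(\<integral>\<^sup>+ t. ennreal (norm (indicator {0..pi} t * G t)) \<partial>lborel) < \<infinity>"
    using intG unfolding set_integrable_def integrable_iff_bounded by simp
  have nnsub: "(\<integral>\<^sup>+ t. ennreal (\<bar>F t\<bar> * indicator {g 0..g pi} t) \<partial>lborel)
      = (\<integral>\<^sup>+ t. ennreal (\<bar>F (g t)\<bar> * g' t * indicator {0..pi} t) \<partial>lborel)"
  proof (rule nn_integral_substitution[OF _ derivg contg' g'nn])
    show "set_borel_measurable borel {g 0..g pi} (\<lambda>t. \<bar>F t\<bar>)" unfolding set_borel_measurable_def by measurable
  qed auto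
  also have "\<dots> = (\<integral>\<^sup>+ t. ennreal (norm (indicator {0..pi} t * G t)) \<partial>lborel)"
  proof (rule nn_integral_cong_AE)
    show "AE t in lborel. ennreal (\<bar>F (g t)\<bar> * g' t * indicator {0..pi} t) = ennreal (norm (indicator {0..pi} t * G t))"
      using AEpw
    proof eventually_elim
      fix t assume h: "F (g t) * g' t * indicator {0..pi} t = - (indicator {0..pi} t * G t)"
      have "\<bar>F (g t)\<bar> * g' t * indicator {0..pi} t = \<bar>F (g t) * g' t * indicator {0..pi} t\<bar>"
        using g'nn[of t] by (cases "t \<in> {0..pi}") (auto simp: abs_mult)
      then show "ennreal (\<bar>F (g t)\<bar> * g' t * indicator {0..pi} t) = ennreal (norm (indicator {0..pi} t * G t))"
        unfolding h by simp
    qed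
  qed
  finally have fin: "(\<integral>\<^sup>+ t. ennreal (\<bar>F t\<bar> * indicator {a..b} t) \<partial>lborel) < \<infinity>"
    using nnG unfolding g0 by simp
  have intF: "set_integrable lborel {a..b} F"
    unfolding set_integrable_def integrable_iff_bounded
  proof
    show "(\<lambda>t. indicator {a..b} t *\<^sub>R F t) \<in> borel_measurable lborel" by measurable
    have "(\<integral>\<^sup>+ t. ennreal (norm (indicator {a..b} t *\<^sub>R F t)) \<partial>lborel) = (\<integral>\<^sup>+ t. ennreal (\<bar>F t\<bar> * indicator {a..b} t) \<partial>lborel)"
      by (intro nn_integral_cong) (auto simp: indicator_def)
    then show "(\<integral>\<^sup>+ t. ennreal (norm (indicator {a..b} t *\<^sub>R F t)) \<partial>lborel) < \<infinity>" using fin by simp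
  qed
  have "(LBINT t. F t * indicator {g 0..g pi} t) = (LBINT t. F (g t) * g' t * indicator {0..pi} t)"
    by (rule integral_substitution(2)[OF _ derivg contg' g'nn]) (auto simp: g0 intF)
  also have "\<dots> = (LBINT t. - (indicator {0..pi} t * G t))"
    apply (rule integral_cong_AE)
      apply (unfold g_def g'_def G_def; measurable)
     apply (unfold g_def g'_def G_def; measurable)
    using AEpw by simp
  also have "\<dots> = - (LBINT t:{0..pi}. G t)" unfolding set_lebesgue_integral_def by simp
  finally have sub: "(LINT t:{a..b}|lborel. F t) = - (LBINT t:{0..pi}. G t)"
    unfolding g0 set_lebesgue_integral_def by (simp add: mult.commute)
  have setc: "(LINT t:{a<..b}|lborel. F t) = (LINT t:{a..b}|lborel. F t)"
  proof (rule set_integral_cong_set)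
    show "set_borel_measurable lborel {a..b} F" "set_borel_measurable lborel {a<..b} F"
      unfolding set_borel_measurable_def by measurable
    show "AE t in lborel. (t \<in> {a..b}) = (t \<in> {a<..b})"
      using AE_lborel_singleton[of a] by eventually_elim auto
  qed
  have rm: "(1 + \<rho>^2) * r = 2 * \<rho> * m"
  proof -
    have BA': "B - A \<noteq> 0" "B + A \<noteq> 0" using AB by auto
    have h: "\<rho> * (B + A) = B - A" unfolding \<rho>_def A_def[symmetric] B_def[symmetric] using BA' by simp
    have key: "((B+A)^2 + (B-A)^2) * r = 2 * (B - A) * (B + A) * m"
      unfolding m_def r_def aA bB by (simp add: field_simps power2_eq_square)
    have "(B+A)^2 * ((1 + \<rho>^2) * r) = ((B+A)^2 + (\<rho> * (B+A))^2) * r" by (simp add: algebra_simps power2_eq_square)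
    also have "\<dots> = 2 * (B - A) * (B + A) * m" unfolding h key ..
    also have "\<dots> = 2 * (B + A) * (\<rho> * (B + A)) * m" unfolding h by (simp only: mult_ac)
    also have "\<dots> = (B+A)^2 * (2 * \<rho> * m)" by (simp add: algebra_simps power2_eq_square)
    finally show ?thesis using BA' by simp
  qed
  have xpos: "0 < x" using x ab by simp
  have rid: "1 - 2 * \<rho> * cos p + \<rho>^2 = 2 * \<rho> * x / r"
  proof -
    have xe: "x = m - r * cos p" unfolding cosp cp_def using r0 by simp
    show ?thesis unfolding xe using rm r0 by (simp add: field_simps)
  qed
  have LF: "ln (1 - 2 * \<rho> * cos p + \<rho>^2) = ln 2 + ln \<rho> + ln x - ln r"
    unfolding rid using rho r0 xpos by (simp add: ln_div ln_mult)
  have Lbma: "ln (b - a) = ln r + ln 2"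
  proof -
    have "b - a = r * 2" unfolding r_def by simp
    then show ?thesis using r0 by (simp add: ln_mult)
  qed
  have Lq: "ln ((b - a) / 4) = ln r - ln 2"
  proof -
    have e: "(b - a) / 4 = r / 2" unfolding r_def by simp
    show ?thesis unfolding e using r0 ln_div[of r 2] by simp
  qed
  have Lrho: "ln ((B + A) / (B - A)) = - ln \<rho>"
  proof -
    have "(B + A) / (B - A) = inverse \<rho>" unfolding \<rho>_def A_def[symmetric] B_def[symmetric] by simp
    then show ?thesis using rho by (simp add: ln_inverse)
  qed
  have c_eq: "cos p = ((a + b) / 2 - x) / ((b - a) / 2)" unfolding cosp cp_def m_def r_def ..
  have c2_eq: "cos (2 * p) = 2 * (cos p)^2 - 1" by (rule cos_double_cos)
  have FA: "- (ln r * (Ap * pi + Dp * pi) + Ap * (- pi * ln 2) + Bp * (- pi * cos p) + Cp * (- pi * cos (2 * p) / 2)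
           + Dp * (pi * ln (1 - 2 * \<rho> * cos p + \<rho>^2) / 2 - pi * ln 2)) + 1/2 * (x^2 + 2 * al * (- ln x))
     = - 1/16 * (a^2 + 6*a*b + b^2 + 2 * (a - b)^2 * ln ((b - a) / 4) - 4 * (a + b)^2
                 + 4 * (b^2 - a^2) * ln ((b - a) / 4))
       - al / (A * B) * ((a + b) / 2 - (b - a) / 2 * ln ((b - a) / 4)
                 - (a + b) * (1/2 + ln 2 - 1/2 * ln (b - a))
                 + (A * B) * ln ((B + A) / (B - A)))"
    by (rule final_algebra2[OF AB aA bB c_eq c2_eq LF Lbma Lq Lrho])
       (simp_all add: Ap_def Bp_def Cp_def Dp_def r_def m_def)
  have AB_eq: "A * B = sqrt (a * b)" unfolding A_def B_def by (simp add: real_sqrt_mult)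
  have "(LINT t:{a<..b}|lborel. ln (1 / \<bar>x - t\<bar>) * nu_density al a b t) = - (LBINT t:{0..pi}. G t)"
    using setc sub unfolding F_def by simp
  moreover have "ln (1 / x) = - ln x" using xpos by (simp add: ln_div)
  ultimately show ?thesis
    using FA unfolding IG A_def B_def by (simp add: real_sqrt_mult)
qed


lemma psi_at_a: "0 < a \<Longrightarrow> psi_alpha al a a = -2"
  unfolding psi_alpha_def by simp

lemma psi_cont: "0 < a \<Longrightarrow> continuous_on {a..c} (\<lambda>x. psi_alpha al x a)"
  unfolding psi_alpha_def by (intro continuous_intros) auto

lemma psi_exists:
  assumes a: "0 < a" and al: "0 \<le> al"
  shows "\<exists>x. a < x \<and> x < a + (2 * al + 2) \<and> psi_alpha al x a = 0"
proof -
  define D where "D = 2 * al + 2"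
  have D2: "2 \<le> D" unfolding D_def using al by simp
  have "psi_alpha al (a + D) a \<ge> 3/4 * D^2 - 2 * al - 2"
  proof -
    have "0 \<le> a * D" using a D2 by simp
    moreover have "0 \<le> 2 * al * (sqrt a / sqrt (a + D))" using a al D2 by simp
    ultimately show ?thesis unfolding psi_alpha_def by simp
  qed
  moreover have "3/4 * D^2 - 2 * al - 2 > 0"
  proof -
    have "3/4 * D^2 \<ge> 3/4 * (2 * D)" using D2 by (simp add: power2_eq_square)
    then show ?thesis unfolding D_def using al by simp
  qed
  ultimately have pos: "psi_alpha al (a + D) a > 0" by linarith
  obtain x where x: "a \<le> x" "x \<le> a + D" "psi_alpha al x a = 0"
    using IVT'[of "\<lambda>x. psi_alpha al x a" a 0 "a + D"] psi_at_a[OF a, of al] pos psi_cont[OF a, of "a + D" al] D2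
    by auto
  have "x \<noteq> a" using x(3) psi_at_a[OF a, of al] by auto
  moreover have "x \<noteq> a + D" using x(3) pos by auto
  ultimately have "a < x" "x < a + D" using x by auto
  then show ?thesis using x(3) unfolding D_def by blast
qed

definition dpsi :: "real \<Rightarrow> real \<Rightarrow> real \<Rightarrow> real" where
  "dpsi al x a = 3/2 * (x - a) + a - al * sqrt a / (x * sqrt x)"

lemma psi_deriv:
  assumes "0 < a" "0 < x"
  shows "((\<lambda>x. psi_alpha al x a) has_real_derivative dpsi al x a) (at x)"
proof -
  have ii: "inverse (sqrt x) * (inverse (sqrt x) * inverse (sqrt x)) = inverse (sqrt x) / x"
    using assms by (simp add: field_simps)
  have d: "((\<lambda>x. 3/4 * (x - a)^2 + a * (x - a) + 2 * al * (sqrt a / sqrt x) - 2 * al - 2) has_real_derivative dpsi al x a) (at x)"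
    using assms
    apply (auto intro!: derivative_eq_intros)
    apply (simp add: dpsi_def ii)
    apply (simp add: field_simps)
    done
  then show ?thesis unfolding psi_alpha_def[abs_def] by simp
qed

lemma dpsi_mono:
  assumes "0 < a" "0 \<le> al" "0 < u" "u < v"
  shows "dpsi al u a < dpsi al v a"
proof -
  have "u * sqrt u \<le> v * sqrt v" using assms by (intro mult_mono) auto
  moreover have "0 < u * sqrt u" using assms by simp
  ultimately have "al * sqrt a / (v * sqrt v) \<le> al * sqrt a / (u * sqrt u)"
    using assms by (intro divide_left_mono) auto
  moreover have "3/2 * (u - a) < 3/2 * (v - a)" using assms by simp
  ultimately show ?thesis unfolding dpsi_def by linarith
qed

lemma psi_unique:
  assumes a: "0 < a" and al: "0 \<le> al"
  assumes x1: "a < x1" "psi_alpha al x1 a = 0" and x2: "a < x2" "psi_alpha al x2 a = 0"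
  shows "x1 = x2"
proof (rule ccontr)
  assume ne: "x1 \<noteq> x2"
  have main: False if y: "a < y1" "y1 < y2" "psi_alpha al y1 a = 0" "psi_alpha al y2 a = 0" for y1 y2
  proof -
    have D: "\<forall>x. a \<le> x \<and> x \<le> y2 \<longrightarrow> ((\<lambda>x. psi_alpha al x a) has_real_derivative dpsi al x a) (at x)"
      using a by (auto intro!: psi_deriv)
    obtain e where e: "a < e" "e < y1" "psi_alpha al y1 a - psi_alpha al a a = (y1 - a) * dpsi al e a"
      using MVT2[of a y1 "\<lambda>x. psi_alpha al x a" "\<lambda>x. dpsi al x a"] y D by auto
    obtain z where z: "y1 < z" "z < y2" "psi_alpha al y2 a - psi_alpha al y1 a = (y2 - y1) * dpsi al z a"
      using MVT2[of y1 y2 "\<lambda>x. psi_alpha al x a" "\<lambda>x. dpsi al x a"] y D by auto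
    have "dpsi al e a > 0"
    proof -
      have "(y1 - a) * dpsi al e a = 2" using e(3) y psi_at_a[OF a, of al] by simp
      then show ?thesis using y(1) by (smt (verit) mult_nonneg_nonpos)
    qed
    moreover have "dpsi al z a = 0" using z(3) y by simp
    moreover have "dpsi al e a < dpsi al z a" using dpsi_mono[OF a al, of e z] e z a by simp
    ultimately show False by simp
  qed
  show False
  proof (cases "x1 < x2")
    case True then show False using main[of x1 x2] x1 x2 by simp
  next
    case False then have "x2 < x1" using ne by simp
    then show False using main[of x2 x1] x1 x2 by simp
  qed
qed

lemma psi_THE:
  assumes a: "0 < a" and al: "0 \<le> al"
  shows "a < (THE x. a < x \<and> psi_alpha al x a = 0)"
proof -
  obtain x where x: "a < x" "psi_alpha al x a = 0" using psi_exists[OF a al] by auto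
  have "(THE x. a < x \<and> psi_alpha al x a = 0) = x"
    by (rule the_equality) (use x psi_unique[OF a al] in auto)
  then show ?thesis using x by simp
qed

lemma E_upper:
  assumes a: "0 < a" and al: "0 \<le> al" and x: "a < x" "psi_alpha al x a = 0"
  shows "x < a + (2 * al + 2)"
proof (rule ccontr)
  define D where "D = 2 * al + 2"
  define d where "d = x - a"
  assume "\<not> x < a + (2 * al + 2)"
  then have dD: "D \<le> d" unfolding D_def d_def by simp
  have D2: "2 \<le> D" unfolding D_def using al by simp
  have "0 \<le> a * d" using a x unfolding d_def by simp
  moreover have "0 \<le> 2 * al * (sqrt a / sqrt x)" using a al x by simp
  ultimately have "3/4 * d^2 \<le> D" using x(2) unfolding psi_alpha_def D_def d_def by simp
  moreover have "3/4 * d^2 \<ge> 3/4 * (2 * d)" using dD D2 by (simp add: power2_eq_square)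
  ultimately show False using dD D2 by simp
qed

lemma E_lower:
  assumes al: "0 < al" and a: "0 < a" and x: "a < x" "0 \<le> phi_alpha al x a" "psi_alpha al x a = 0"
  shows "min 1 (4 * al^2 / ((2 + (2 * al + 2))^2 * (1 + (2 * al + 2)))) \<le> a"
proof (cases "a \<le> 1")
  case False then show ?thesis by simp
next
  case True
  define D where "D = 2 * al + 2"
  have xD: "x < a + D" using E_upper[OF a _ x(1,3)] al unfolding D_def by simp
  have x0: "0 < x" using a x by simp
  have sq: "0 < sqrt (a * x)" using a x0 by simp
  have "2 * al / sqrt (a * x) \<le> x + a" using x(2) unfolding phi_alpha_def by simp
  then have "2 * al \<le> (x + a) * sqrt (a * x)" using sq by (simp add: divide_le_eq)
  then have "(2 * al)^2 \<le> ((x + a) * sqrt (a * x))^2" using al by (intro power_mono) auto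
  also have "\<dots> = (x + a)^2 * a * x" using a x0 by (simp add: power_mult_distrib)
  also have "\<dots> \<le> (2 + D)^2 * a * (1 + D)"
  proof -
    have "(x + a)^2 \<le> (2 + D)^2" using xD True a x0 by (intro power_mono) auto
    moreover have "x \<le> 1 + D" using xD True by simp
    ultimately have "(x + a)^2 * x \<le> (2 + D)^2 * (1 + D)"
      using x0 by (intro mult_mono) auto
    then show ?thesis using a by (simp add: mult.commute mult.left_commute)
  qed
  finally have "4 * al^2 \<le> a * ((2 + D)^2 * (1 + D))" by (simp add: power_mult_distrib mult_ac)
  moreover have "0 < (2 + D)^2 * (1 + D)" unfolding D_def using al by simp
  ultimately have "4 * al^2 / ((2 + D)^2 * (1 + D)) \<le> a" by (simp add: divide_le_eq)
  then show ?thesis unfolding D_def by simp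
qed

lemma a_crit_pos:
  assumes al: "0 < al"
  shows "a_crit al \<in> E_alpha al"
proof -
  define D where "D = 2 * al + 2"
  define a0 where "a0 = al + 1"
  define \<epsilon> where "\<epsilon> = min 1 (4 * al^2 / ((2 + (2 * al + 2))^2 * (1 + (2 * al + 2))))"
  have eps: "0 < \<epsilon>" unfolding \<epsilon>_def using al by simp
  have a00: "0 < a0" unfolding a0_def using al by simp
  obtain x0 where x0: "a0 < x0" "x0 < a0 + D" "psi_alpha al x0 a0 = 0"
    using psi_exists[OF a00, of al] al unfolding D_def by auto
  have phi0: "0 \<le> phi_alpha al x0 a0"
  proof -
    have "a0 \<le> sqrt (a0 * x0)"
    proof -
      have "sqrt (a0 * a0) \<le> sqrt (a0 * x0)" using x0 a00 by (intro real_sqrt_le_mono mult_left_mono) auto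
      then show ?thesis using a00 by simp
    qed
    moreover have "0 < sqrt (a0 * x0) * a0" using x0 a00 by (intro mult_pos_pos) auto
    ultimately have "2 * al / sqrt (a0 * x0) \<le> 2 * al / a0" using al a00 by (intro divide_left_mono) auto
    also have "\<dots> \<le> 2" unfolding a0_def using al by (simp add: divide_le_eq)
    also have "2 \<le> x0 + a0" using x0 unfolding a0_def using al by simp
    finally show ?thesis unfolding phi_alpha_def by simp
  qed
  have a0E: "a0 \<in> E_alpha al" unfolding E_alpha_def using a00 x0 phi0 by auto
  have lowE: "\<epsilon> \<le> a" if "a \<in> E_alpha al" for a
  proof -
    from that obtain x where "0 < a" "a < x" "0 \<le> phi_alpha al x a" "psi_alpha al x a = 0"
      unfolding E_alpha_def by auto
    then show ?thesis unfolding \<epsilon>_def by (rule E_lower[OF al])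
  qed
  define S0 where "S0 = {\<epsilon>..a0} \<times> {\<epsilon>..a0 + D}"
  define S1 where "S1 = S0 \<inter> {p. fst p \<le> snd p}"
  define S2 where "S2 = S1 \<inter> (\<lambda>p. phi_alpha al (snd p) (fst p)) -` {0..}"
  define K where "K = S2 \<inter> (\<lambda>p. psi_alpha al (snd p) (fst p)) -` {0}"
  have pos1: "0 < fst p" "0 < snd p" if "p \<in> S1" for p
    using that eps unfolding S1_def S0_def by (auto simp: mem_Times_iff)
  have cS0: "compact S0" unfolding S0_def by (intro compact_Times compact_Icc)
  have clS1: "closed S1" unfolding S1_def
    by (intro closed_Int compact_imp_closed cS0 closed_Collect_le continuous_intros)
  have clS2: "closed S2" unfolding S2_def
  proof (rule continuous_closed_preimage[OF _ clS1])
    show "continuous_on S1 (\<lambda>p. phi_alpha al (snd p) (fst p))"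
      unfolding phi_alpha_def using pos1 by (intro continuous_intros) (auto, force+)
  qed auto
  have S21: "S2 \<subseteq> S1" unfolding S2_def by auto
  have clK: "closed K" unfolding K_def
  proof (rule continuous_closed_preimage[OF _ clS2])
    show "continuous_on S2 (\<lambda>p. psi_alpha al (snd p) (fst p))"
      unfolding psi_alpha_def using pos1 S21 by (intro continuous_intros) (auto simp: subset_iff, force+)
  qed auto
  have KS0: "K \<subseteq> S0" unfolding K_def S2_def S1_def by auto
  have cK: "compact K"
  proof -
    have "compact (S0 \<inter> K)" using cS0 clK by (rule compact_Int_closed)
    moreover have "S0 \<inter> K = K" using KS0 by auto
    ultimately show ?thesis by simp
  qed
  have memK: "(a, x) \<in> K \<longleftrightarrow> \<epsilon> \<le> a \<and> a \<le> a0 \<and> \<epsilon> \<le> x \<and> x \<le> a0 + D \<and> a \<le> x \<and> 0 \<le> phi_alpha al x a \<and> psi_alpha al x a = 0" for a x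
    unfolding K_def S2_def S1_def S0_def by auto
  have a0K: "(a0, x0) \<in> K" unfolding memK using x0 phi0 lowE[OF a0E] by auto
  have cfK: "compact (fst ` K)" using cK by (intro compact_continuous_image continuous_intros)
  have neK: "fst ` K \<noteq> {}" using a0K by auto
  obtain amin where amin: "amin \<in> fst ` K" "\<And>y. y \<in> fst ` K \<Longrightarrow> amin \<le> y"
    using compact_attains_inf[OF cfK neK] by auto
  have aminE: "amin \<in> E_alpha al"
  proof -
    from amin(1) obtain x where x: "(amin, x) \<in> K" by auto
    then have h: "\<epsilon> \<le> amin" "amin \<le> x" "0 \<le> phi_alpha al x amin" "psi_alpha al x amin = 0" unfolding memK by auto
    have "0 < amin" using h eps by simp
    moreover have "x \<noteq> amin" using h(4) psi_at_a[OF \<open>0 < amin\<close>, of al] by auto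
    then have "amin < x" using h(2) by simp
    ultimately show ?thesis unfolding E_alpha_def using h by blast
  qed
  have aminle: "amin \<le> y" if "y \<in> E_alpha al" for y
  proof (cases "y \<le> a0")
    case True
    from that obtain x where x: "0 < y" "y < x" "0 \<le> phi_alpha al x y" "psi_alpha al x y = 0"
      unfolding E_alpha_def by auto
    have "x < y + D" using E_upper[OF x(1) _ x(2,4)] al unfolding D_def by simp
    then have "(y, x) \<in> K" unfolding memK using x True lowE[OF that] by auto
    then show ?thesis using amin(2) by force
  next
    case False
    have "amin \<le> a0" using amin(2) a0K by force
    then show ?thesis using False by simp
  qed
  have "a_crit al = amin" unfolding a_crit_def
    by (rule Least_equality) (use aminE aminle in auto)
  then show ?thesis using aminE by simp
qed


theorem proposition4p3:
  fixes \<sigma> \<alpha> a b :: real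
  assumes "\<sigma> \<ge> 0" and "\<alpha> \<ge> 0"
    and ab: "(\<alpha> > 0 \<and> a = max \<sigma> (a_crit \<alpha>) \<and> b = (THE x. x > a \<and> psi_alpha \<alpha> x a = 0))
           \<or> (\<alpha> = 0 \<and> \<sigma> > 0 \<and> a = \<sigma> \<and> b = 2/3 * (sqrt (\<sigma>^2 + 6) + \<sigma> / 2))"
  shows "\<forall>x\<in>{a<..b}.
     (LINT t:{a<..b}|lborel. ln (1 / \<bar>x - t\<bar>) * nu_density \<alpha> a b t)
       + 1/2 * (x^2 + 2 * \<alpha> * ln (1 / x))
     = - 1/16 * (a^2 + 6*a*b + b^2 + 2 * (a - b)^2 * ln ((b - a) / 4) - 4 * (a + b)^2
                 + 4 * (b^2 - a^2) * ln ((b - a) / 4))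
       - \<alpha> / sqrt (a * b) * ((a + b) / 2 - (b - a) / 2 * ln ((b - a) / 4)
                 - (a + b) * (1/2 + ln 2 - 1/2 * ln (b - a))
                 + sqrt (a * b) * ln ((sqrt b + sqrt a) / (sqrt b - sqrt a)))"
proof -
  have pos: "0 < a \<and> a < b"
  proof (cases "\<alpha> > 0 \<and> a = max \<sigma> (a_crit \<alpha>) \<and> b = (THE x. x > a \<and> psi_alpha \<alpha> x a = 0)")
    case True
    have "a_crit \<alpha> \<in> E_alpha \<alpha>" using True by (intro a_crit_pos) simp
    then have "0 < a_crit \<alpha>" unfolding E_alpha_def by simp
    then have a0: "0 < a" using True by simp
    have "a < (THE x. a < x \<and> psi_alpha \<alpha> x a = 0)" by (rule psi_THE[OF a0 assms(2)])
    then show ?thesis using True a0 by simp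
  next
    case False
    then have h: "\<sigma> > 0" "a = \<sigma>" "b = 2/3 * (sqrt (\<sigma>^2 + 6) + \<sigma> / 2)" using ab by auto
    have "sqrt (\<sigma>^2) < sqrt (\<sigma>^2 + 6)" by (rule real_sqrt_less_mono) simp
    moreover have "sqrt (\<sigma>^2) = \<sigma>" using h(1) by simp
    ultimately have "\<sigma> < sqrt (\<sigma>^2 + 6)" by simp
    then show ?thesis using h by simp
  qed
  show ?thesis
  proof
    fix x assume "x \<in> {a<..b}"
    then have "a < x" "x \<le> b" by auto
    then show "(LINT t:{a<..b}|lborel. ln (1 / \<bar>x - t\<bar>) * nu_density \<alpha> a b t)
       + 1/2 * (x^2 + 2 * \<alpha> * ln (1 / x))
     = - 1/16 * (a^2 + 6*a*b + b^2 + 2 * (a - b)^2 * ln ((b - a) / 4) - 4 * (a + b)^2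
                 + 4 * (b^2 - a^2) * ln ((b - a) / 4))
       - \<alpha> / sqrt (a * b) * ((a + b) / 2 - (b - a) / 2 * ln ((b - a) / 4)
                 - (a + b) * (1/2 + ln 2 - 1/2 * ln (b - a))
                 + sqrt (a * b) * ln ((sqrt b + sqrt a) / (sqrt b - sqrt a)))"
      using main_identity[of a b x \<alpha>] pos by simp
  qed
qed

end
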